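(* Let $\mathcal C$ be either a closed convex curve, or a convex arc with total curvature $\int_{\mathcal C}\kappa\,ds\le\pi$, and assume its radius of curvature satisfies $R_1\le\rho\le R_2$ at every point, for constants $0<R_1\le R_2$. Let $\mathcal L$ be a lattice in $\mathbb R^2$ and let $P_1',P_2',P_3'$ be distinct points of $\mathcal L$ with $\mathrm{dist}(P_j',\mathcal C)<\delta$ for $j=1,2,3$, where $\delta>0$ satisfies $$\delta<\frac{d_{\mathcal L}^2}{2\left(R_2+d_{\mathcal L}+\sqrt{(R_2+d_{\mathcal L})^2-d_{\mathcal L}^2}\right)},$$ and let $P_j$ be a point of $\mathcal C$ with $\|P_j-P_j'\|<\delta$ for $j=1,2,3$. Then $$\mathrm{Area}(\triangle P_1P_2P_3)\ge\frac{A_{\mathcal L}}{2}-\big(\|P_2-P_1\|+\|P_3-P_2\|\big)\delta-\frac32\delta^2.$$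
   Context: A lattice is a set $\mathcal L=\mathcal L(v_0,v_1,v_2)=\{v_0+mv_1+nv_2: m,n\in\mathbb Z\}$ where $v_0,v_1,v_2\in\mathbb R^2$ and $v_1,v_2$ are linearly independent; $A_{\mathcal L}=|\det(v_1,v_2)|$ and $d_{\mathcal L}=\min\{\|P-Q\|:P,Q\in\mathcal L,\ P\ne Q\}$. Curves are of class $C^2$ with nonvanishing first and second derivative vectors, oriented so that the curvature $\kappa$ is positive; a convex arc is such a non-closed curve on the boundary of a convex planar region. $\rho=1/\kappa$, $s$ is arclength, and $\mathrm{dist}(P,\mathcal C)$ is the Euclidean distance from $P$ to $\mathcal C$. *)

theory Defs
  imports "HOL-Analysis.Analysis"
begin

text \<open>Points of the plane are modelled as pairs of reals (the product norm is Euclidean).\<close>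

definition det2 :: "real \<times> real \<Rightarrow> real \<times> real \<Rightarrow> real" where
  "det2 u v = fst u * snd v - snd u * fst v"

definition lattice :: "real \<times> real \<Rightarrow> real \<times> real \<Rightarrow> real \<times> real \<Rightarrow> (real \<times> real) set" where
  "lattice v0 v1 v2 = {v0 + of_int m *\<^sub>R v1 + of_int n *\<^sub>R v2 | m n. True}"

definition lattice_area :: "real \<times> real \<Rightarrow> real \<times> real \<Rightarrow> real" where
  "lattice_area v1 v2 = \<bar>det2 v1 v2\<bar>"

text \<open>Minimal distance between distinct lattice points (the minimum exists; Inf equals it).\<close>
definition lattice_mindist :: "(real \<times> real) set \<Rightarrow> real" where
  "lattice_mindist L = Inf {dist P Q | P Q. P \<in> L \<and> Q \<in> L \<and> P \<noteq> Q}"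

definition tri_area :: "real \<times> real \<Rightarrow> real \<times> real \<Rightarrow> real \<times> real \<Rightarrow> real" where
  "tri_area P1 P2 P3 = \<bar>det2 (P2 - P1) (P3 - P1)\<bar> / 2"

definition curvature :: "(real \<Rightarrow> real \<times> real) \<Rightarrow> (real \<Rightarrow> real \<times> real) \<Rightarrow> real \<Rightarrow> real" where
  "curvature g1 g2 t = det2 (g1 t) (g2 t) / norm (g1 t) ^ 3"

definition closed_convex_curve ::
  "(real \<Rightarrow> real \<times> real) \<Rightarrow> (real \<Rightarrow> real \<times> real) \<Rightarrow> (real \<Rightarrow> real \<times> real) \<Rightarrow> real \<Rightarrow> real \<Rightarrow> bool" where
  "closed_convex_curve g g1 g2 a b \<longleftrightarrow>
     a < b \<and>
     (\<forall>t. g (t + (b - a)) = g t) \<and>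
     (\<forall>t. (g has_vector_derivative g1 t) (at t)) \<and>
     (\<forall>t. (g1 has_vector_derivative g2 t) (at t)) \<and>
     continuous_on UNIV g2 \<and>
     (\<forall>t. g1 t \<noteq> 0 \<and> g2 t \<noteq> 0 \<and> curvature g1 g2 t > 0) \<and>
     inj_on g {a..<b} \<and>
     (\<exists>K. convex K \<and> compact K \<and> interior K \<noteq> {} \<and> g ` {a..b} = frontier K)"

definition convex_arc ::
  "(real \<Rightarrow> real \<times> real) \<Rightarrow> (real \<Rightarrow> real \<times> real) \<Rightarrow> (real \<Rightarrow> real \<times> real) \<Rightarrow> real \<Rightarrow> real \<Rightarrow> bool" where
  "convex_arc g g1 g2 a b \<longleftrightarrow>
     a < b \<and>
     (\<forall>t\<in>{a..b}. (g has_vector_derivative g1 t) (at t within {a..b})) \<and>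
     (\<forall>t\<in>{a..b}. (g1 has_vector_derivative g2 t) (at t within {a..b})) \<and>
     continuous_on {a..b} g2 \<and>
     (\<forall>t\<in>{a..b}. g1 t \<noteq> 0 \<and> g2 t \<noteq> 0 \<and> curvature g1 g2 t > 0) \<and>
     inj_on g {a..b} \<and>
     (\<exists>K. convex K \<and> interior K \<noteq> {} \<and> g ` {a..b} \<subseteq> frontier K)"

text \<open>Total curvature: integral of kappa ds = integral of kappa(t) |g'(t)| dt.\<close>
definition total_curvature ::
  "(real \<Rightarrow> real \<times> real) \<Rightarrow> (real \<Rightarrow> real \<times> real) \<Rightarrow> real \<Rightarrow> real \<Rightarrow> real" where
  "total_curvature g1 g2 a b = integral {a..b} (\<lambda>t. curvature g1 g2 t * norm (g1 t))"

end

theory Submission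
  imports Defs
begin


lemma hvd_fst: "(f has_vector_derivative v) F \<Longrightarrow> ((\<lambda>t. fst (f t)) has_real_derivative fst v) F"
  using bounded_linear.has_vector_derivative[OF bounded_linear_fst]
  by (simp add: has_real_derivative_iff_has_vector_derivative)

lemma hvd_snd: "(f has_vector_derivative v) F \<Longrightarrow> ((\<lambda>t. snd (f t)) has_real_derivative snd v) F"
  using bounded_linear.has_vector_derivative[OF bounded_linear_snd]
  by (simp add: has_real_derivative_iff_has_vector_derivative)

lemma det2_alt: "det2 u v = fst u * snd v - snd u * fst v" by (simp add: det2_def)

lemma norm_pair_sq: "(norm (v::real\<times>real))^2 = (fst v)^2 + (snd v)^2"
  by (simp add: norm_prod_def)

lemma norm_fst_le': "\<bar>fst (v::real\<times>real)\<bar> \<le> norm v"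
  by (metis norm_fst_le prod.collapse real_norm_def)

lemma norm_snd_le': "\<bar>snd (v::real\<times>real)\<bar> \<le> norm v"
  by (metis norm_snd_le prod.collapse real_norm_def)

locale cv =
  fixes g g1 g2 :: "real \<Rightarrow> real \<times> real" and I :: "real set" and R :: real
  assumes I_int: "\<And>s t. s \<in> I \<Longrightarrow> t \<in> I \<Longrightarrow> {s..t} \<subseteq> I"
    and I_closed: "closed I"
    and d1: "\<And>t. t \<in> I \<Longrightarrow> (g has_vector_derivative g1 t) (at t within I)"
    and d2: "\<And>t. t \<in> I \<Longrightarrow> (g1 has_vector_derivative g2 t) (at t within I)"
    and detpos: "\<And>t. t \<in> I \<Longrightarrow> det2 (g1 t) (g2 t) > 0"
    and Rpos: "R > 0"
    and curvR: "\<And>t. t \<in> I \<Longrightarrow> norm (g1 t) ^ 3 \<le> R * det2 (g1 t) (g2 t)"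
    and TL: "\<And>t s. t \<in> I \<Longrightarrow> s \<in> I \<Longrightarrow> det2 (g1 t) (g s - g t) \<ge> 0"
begin

definition "x t = fst (g t)"
definition "y t = snd (g t)"
definition "xd t = fst (g1 t)"
definition "yd t = snd (g1 t)"
definition "xdd t = fst (g2 t)"
definition "ydd t = snd (g2 t)"
definition "sig t = yd t / xd t"
definition "G t = sig t - x t / R"

lemma dx: "t \<in> I \<Longrightarrow> (x has_real_derivative xd t) (at t within I)"
  unfolding x_def xd_def using hvd_fst[OF d1] .
lemma dy: "t \<in> I \<Longrightarrow> (y has_real_derivative yd t) (at t within I)"
  unfolding y_def yd_def using hvd_snd[OF d1] .
lemma dxd: "t \<in> I \<Longrightarrow> (xd has_real_derivative xdd t) (at t within I)"
  unfolding xd_def xdd_def using hvd_fst[OF d2] .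
lemma dyd: "t \<in> I \<Longrightarrow> (yd has_real_derivative ydd t) (at t within I)"
  unfolding yd_def ydd_def using hvd_snd[OF d2] .

lemma cont_within: "(f has_real_derivative D) (at t within I) \<Longrightarrow> continuous (at t within I) f"
  by (rule DERIV_continuous)

lemma contI: assumes "\<And>t. t \<in> I \<Longrightarrow> (f has_real_derivative D t) (at t within I)"
  shows "continuous_on I f"
  using assms continuous_on_eq_continuous_within DERIV_continuous by blast

lemma cx: "continuous_on I x" using contI dx by blast
lemma cy: "continuous_on I y" using contI dy by blast
lemma cxd: "continuous_on I xd" using contI dxd by blast
lemma cyd: "continuous_on I yd" using contI dyd by blast

lemma det_eq: "det2 (g1 t) (g2 t) = xd t * ydd t - yd t * xdd t"
  by (simp add: det2_def xd_def yd_def xdd_def ydd_def)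

lemma TL': "t \<in> I \<Longrightarrow> s \<in> I \<Longrightarrow> xd t * (y s - y t) - yd t * (x s - x t) \<ge> 0"
  using TL[of t s] by (simp add: det2_def xd_def yd_def x_def y_def)

lemma detpos': "t \<in> I \<Longrightarrow> xd t * ydd t - yd t * xdd t > 0"
  using detpos det_eq by simp

lemma norm_g1_sq: "(norm (g1 t))^2 = (xd t)^2 + (yd t)^2"
  by (simp add: norm_pair_sq xd_def yd_def)

lemma xd_le_norm: "\<bar>xd t\<bar> \<le> norm (g1 t)"
  unfolding xd_def by (rule norm_fst_le')

lemma curv_x: assumes "t \<in> I" shows "\<bar>xd t\<bar>^3 \<le> R * (xd t * ydd t - yd t * xdd t)"
proof -
  have "\<bar>xd t\<bar>^3 \<le> norm (g1 t)^3" by (rule power_mono[OF xd_le_norm]) simp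
  also have "\<dots> \<le> R * det2 (g1 t) (g2 t)" using curvR assms by blast
  finally show ?thesis using det_eq by simp
qed

lemma sub_I: "s \<in> I \<Longrightarrow> t \<in> I \<Longrightarrow> u \<in> {s..t} \<Longrightarrow> u \<in> I" using I_int by blast

lemma at_interior: assumes "s \<in> I" "t \<in> I" "u \<in> {s<..<t}" shows "at u within I = at u"
proof -
  have "{s<..<t} \<subseteq> interior I" using I_int[OF assms(1,2)] by (meson greaterThanLessThan_subseteq_atLeastAtMost_iff interior_maximal open_greaterThanLessThan order_refl subset_trans)
  thus ?thesis using assms(3) at_within_interior by blast
qed

end


context cv begin

lemma incr: assumes "p \<in> I" "q \<in> I" "p \<le> q"
  and "\<And>t. t \<in> {p..q} \<Longrightarrow> (f has_real_derivative D t) (at t within I)"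
  and "\<And>t. t \<in> {p<..<q} \<Longrightarrow> D t \<ge> 0"
  shows "f p \<le> f q"
proof (rule DERIV_nonneg_imp_increasing_open[OF assms(3)])
  fix t assume "p < t" "t < q"
  hence "t \<in> {p..q}" "t \<in> {p<..<q}" by auto
  thus "\<exists>y. (f has_real_derivative y) (at t) \<and> 0 \<le> y"
    using assms(4,5) at_interior[OF assms(1,2)] by metis
next
  have "\<And>t. t \<in> {p..q} \<Longrightarrow> continuous (at t within {p..q}) f"
    using assms(4) I_int[OF assms(1,2)] by (meson DERIV_continuous continuous_within_subset)
  thus "continuous_on {p..q} f" using continuous_on_eq_continuous_within by blast
qed

end

context cv begin
lemma decr: assumes "p \<in> I" "q \<in> I" "p \<le> q"
  and "\<And>t. t \<in> {p..q} \<Longrightarrow> (f has_real_derivative D t) (at t within I)"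
  and "\<And>t. t \<in> {p<..<q} \<Longrightarrow> D t \<le> 0"
  shows "f p \<ge> f q"
proof -
  have "(\<lambda>t. - f t) p \<le> (\<lambda>t. - f t) q"
  proof (rule incr[OF assms(1-3), of _ "\<lambda>t. - D t"])
    fix t assume "t \<in> {p..q}"
    thus "((\<lambda>t. - f t) has_real_derivative - D t) (at t within I)" using assms(4) DERIV_minus by blast
  next
    fix t assume "t \<in> {p<..<q}"
    thus "- D t \<ge> 0" using assms(5) by simp
  qed
  thus ?thesis by simp
qed

lemma dG: assumes "t \<in> I" "xd t \<noteq> 0"
  shows "(G has_real_derivative ((xd t * ydd t - yd t * xdd t)/(xd t)^2 - xd t / R)) (at t within I)"
proof -
  have "(sig has_real_derivative (ydd t * xd t - yd t * xdd t) / (xd t * xd t)) (at t within I)"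
    unfolding sig_def[abs_def] by (rule DERIV_divide[OF dyd[OF assms(1)] dxd[OF assms(1)] assms(2)])
  moreover have "((\<lambda>t. x t / R) has_real_derivative xd t / R) (at t within I)"
    by (rule DERIV_cdivide[OF dx[OF assms(1)]])
  ultimately have "((\<lambda>t. sig t - x t / R) has_real_derivative (ydd t * xd t - yd t * xdd t) / (xd t * xd t) - xd t / R) (at t within I)"
    by (rule DERIV_diff)
  thus ?thesis unfolding G_def[abs_def] by (simp add: power2_eq_square mult.commute)
qed

end

context cv begin
lemma dG_nonneg: assumes "t \<in> I" "xd t > 0"
  shows "(xd t * ydd t - yd t * xdd t)/(xd t)^2 - xd t / R \<ge> 0"
proof -
  define D where "D = xd t * ydd t - yd t * xdd t"
  have h: "xd t * (xd t)^2 \<le> R * D" using curv_x[OF assms(1)] assms(2) unfolding D_def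
    by (simp add: power3_eq_cube power2_eq_square)
  have p: "(xd t)^2 > 0" using assms(2) by simp
  have "xd t / R \<le> D / (xd t)^2"
    using h p Rpos by (simp add: pos_divide_le_eq pos_le_divide_eq mult.commute)
  thus ?thesis unfolding D_def by simp
qed

end

context cv begin
lemma G_mono: assumes "p \<in> I" "q \<in> I" "p \<le> q" "\<And>t. t \<in> {p..q} \<Longrightarrow> xd t > 0"
  shows "G p \<le> G q"
proof (rule incr[OF assms(1-3)])
  fix t assume t: "t \<in> {p..q}"
  have tI: "t \<in> I" by (rule sub_I[OF assms(1,2) t])
  have "xd t \<noteq> 0" using assms(4)[OF t] by linarith
  thus "(G has_real_derivative ((xd t * ydd t - yd t * xdd t)/(xd t)^2 - xd t / R)) (at t within I)"
    by (rule dG[OF tI])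
next
  fix t assume t: "t \<in> {p<..<q}"
  hence t': "t \<in> {p..q}" by simp
  have tI: "t \<in> I" by (rule sub_I[OF assms(1,2) t'])
  show "(xd t * ydd t - yd t * xdd t)/(xd t)^2 - xd t / R \<ge> 0"
    by (rule dG_nonneg[OF tI assms(4)[OF t']])
qed

end

context cv begin

definition "F u t = y t - y u - sig u * (x t - x u) - (x t - x u) * (x t - x u) / (2*R)"

lemma dF: assumes "t \<in> I"
  shows "(F u has_real_derivative (yd t - sig u * xd t - (x t - x u) * xd t / R)) (at t within I)"
proof -
  have a: "((\<lambda>t. x t - x u) has_real_derivative xd t) (at t within I)"
    using DERIV_diff[OF dx[OF assms] DERIV_const[of "x u"]] by simp
  have b: "((\<lambda>t. sig u * (x t - x u)) has_real_derivative sig u * xd t) (at t within I)"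
    using DERIV_cmult[OF a] by simp
  have c: "((\<lambda>t. (x t - x u) * (x t - x u)) has_real_derivative xd t * (x t - x u) + xd t * (x t - x u)) (at t within I)"
    by (rule DERIV_mult[OF a a])
  have c2: "((\<lambda>t. (x t - x u) * (x t - x u) / (2*R)) has_real_derivative (xd t * (x t - x u) + xd t * (x t - x u)) / (2*R)) (at t within I)"
    by (rule DERIV_cdivide[OF c])
  have d: "((\<lambda>t. y t - y u) has_real_derivative yd t) (at t within I)"
    using DERIV_diff[OF dy[OF assms] DERIV_const[of "y u"]] by simp
  have "((\<lambda>t. y t - y u - sig u * (x t - x u) - (x t - x u) * (x t - x u) / (2*R)) has_real_derivative
        yd t - sig u * xd t - (xd t * (x t - x u) + xd t * (x t - x u)) / (2*R)) (at t within I)"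
    by (rule DERIV_diff[OF DERIV_diff[OF d b] c2])
  moreover have "yd t - sig u * xd t - (xd t * (x t - x u) + xd t * (x t - x u)) / (2*R) = yd t - sig u * xd t - (x t - x u) * xd t / R"
    using Rpos by (simp add: field_simps)
  ultimately show ?thesis unfolding F_def[abs_def] by (simp add: mult.commute)
qed

lemma dF_eq: assumes "xd t \<noteq> 0"
  shows "yd t - sig u * xd t - (x t - x u) * xd t / R = xd t * (G t - G u)"
proof -
  have "yd t = sig t * xd t" using assms unfolding sig_def by simp
  thus ?thesis unfolding G_def by (simp add: algebra_simps diff_divide_distrib)
qed

lemma TP_fwd: assumes "u \<in> I" "v \<in> I" "u < v" "\<And>t. u \<le> t \<Longrightarrow> t < v \<Longrightarrow> xd t > 0"
  shows "y v \<ge> y u + sig u * (x v - x u) + (x v - x u) * (x v - x u) / (2*R)"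
proof -
  have "F u u \<le> F u v"
  proof (rule incr[OF assms(1,2)])
    show "u \<le> v" using assms(3) by simp
    fix t assume t: "t \<in> {u..v}"
    have tI: "t \<in> I" by (rule sub_I[OF assms(1,2) t])
    show "(F u has_real_derivative (yd t - sig u * xd t - (x t - x u) * xd t / R)) (at t within I)"
      by (rule dF[OF tI])
  next
    fix t assume t: "t \<in> {u<..<v}"
    hence t': "t \<in> {u..v}" by simp
    have tI: "t \<in> I" by (rule sub_I[OF assms(1,2) t'])
    have "G u \<le> G t"
    proof (rule G_mono[OF assms(1) tI])
      show "u \<le> t" using t by simp
      fix s assume "s \<in> {u..t}" thus "xd s > 0" using assms(4) t by simp
    qed
    moreover have "xd t > 0" using assms(4) t by simp
    ultimately show "yd t - sig u * xd t - (x t - x u) * xd t / R \<ge> 0"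
      by (simp add: dF_eq)
  qed
  thus ?thesis unfolding F_def by simp
qed

lemma TP_bwd: assumes "u \<in> I" "v \<in> I" "v < u" "\<And>t. v < t \<Longrightarrow> t \<le> u \<Longrightarrow> xd t > 0"
  shows "y v \<ge> y u + sig u * (x v - x u) + (x v - x u) * (x v - x u) / (2*R)"
proof -
  have "F u v \<ge> F u u"
  proof (rule decr[OF assms(2,1)])
    show "v \<le> u" using assms(3) by simp
    fix t assume t: "t \<in> {v..u}"
    have tI: "t \<in> I" by (rule sub_I[OF assms(2,1) t])
    show "(F u has_real_derivative (yd t - sig u * xd t - (x t - x u) * xd t / R)) (at t within I)"
      by (rule dF[OF tI])
  next
    fix t assume t: "t \<in> {v<..<u}"
    hence t': "t \<in> {v..u}" by simp
    have tI: "t \<in> I" by (rule sub_I[OF assms(2,1) t'])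
    have "G t \<le> G u"
    proof (rule G_mono[OF tI assms(1)])
      show "t \<le> u" using t by simp
      fix s assume "s \<in> {t..u}" thus "xd s > 0" using assms(4) t by simp
    qed
    moreover have "xd t > 0" using assms(4) t by simp
    ultimately show "yd t - sig u * xd t - (x t - x u) * xd t / R \<le> 0"
      by (simp add: dF_eq mult_nonneg_nonpos)
  qed
  thus ?thesis unfolding F_def by simp
qed

end


lemma lim_lemma: fixes A R Y Z :: real
  assumes "0 < A" "0 < R" "\<And>a. 0 < a \<Longrightarrow> a < A \<Longrightarrow> Y \<ge> Z - a*a/(2*R)"
  shows "Y \<ge> Z"
proof (rule ccontr)
  assume "\<not> Y \<ge> Z"
  hence gp: "Z - Y > 0" by simp
  define a where "a = min (A/2) (R * (Z - Y) / A)"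
  have a0: "0 < a" unfolding a_def using assms(1,2) gp by simp
  have a1: "a \<le> A/2" "a \<le> R * (Z - Y) / A" unfolding a_def by (rule min.cobounded1, rule min.cobounded2)
  have aA: "a < A" using a1(1) assms(1) by linarith
  have "a * a \<le> (A/2) * (R * (Z - Y) / A)"
    by (rule mult_mono[OF a1]) (use a0 assms(1) in auto)
  also have "\<dots> = R * (Z - Y) / 2" using assms(1) by simp
  finally have "a * a / (2*R) \<le> (Z - Y) / 4" using assms(2) by (simp add: field_simps)
  moreover have "Y \<ge> Z - a*a/(2*R)" using assms(3)[OF a0 aA] .
  moreover have "(Z - Y) / 4 < Z - Y" using gp by simp
  ultimately show False by linarith
qed

context cv begin

lemma vert_contra: assumes "tm \<in> I" "ta \<in> I" "tb \<in> I" "x ta < x tm" "x tm < x tb" "xd tm = 0"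
  shows False
proof -
  have 1: "- yd tm * (x ta - x tm) \<ge> 0" using TL'[OF assms(1,2)] assms(6) by simp
  have 2: "- yd tm * (x tb - x tm) \<ge> 0" using TL'[OF assms(1,3)] assms(6) by simp
  have "yd tm \<ge> 0" using 1 assms(4) by (simp add: mult_le_0_iff)
  moreover have "yd tm \<le> 0" using 2 assms(5) by (simp add: mult_le_0_iff)
  ultimately have "yd tm = 0" by simp
  thus False using detpos'[OF assms(1)] assms(6) by simp
qed

end

context cv begin

lemma leftmost: assumes "a \<in> I" "tm \<in> I" "a < tm" "xd a = 0" "\<And>t. a < t \<Longrightarrow> t \<le> tm \<Longrightarrow> xd t > 0"
  shows "\<And>s. s \<in> I \<Longrightarrow> x s \<ge> x a" and "yd a < 0"
proof -
  have xdd: "xdd a \<ge> 0"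
  proof (rule ccontr)
    assume "\<not> xdd a \<ge> 0"
    hence "xdd a < 0" by simp
    from has_real_derivative_neg_dec_right[OF dxd[OF assms(1)] this]
    obtain d where d0: "d > 0" and d: "\<forall>h>0. a + h \<in> I \<longrightarrow> h < d \<longrightarrow> xd a > xd (a + h)"
      by blast
    define h where "h = min (d/2) (tm - a)"
    have h1: "h > 0" unfolding h_def using d0 assms(3) by simp
    have h2: "h < d" unfolding h_def using d0 by simp
    have h3: "a + h \<le> tm" unfolding h_def by simp
    have "a + h \<in> {a..tm}" using h1 h3 by simp
    hence "a + h \<in> I" by (rule sub_I[OF assms(1,2)])
    hence "xd a > xd (a + h)" using d h1 h2 by blast
    moreover have "xd (a + h) > 0" using assms(5)[of "a+h"] h1 h3 by simp
    ultimately show False using assms(4) by simp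
  qed
  have dp: "- (yd a * xdd a) > 0" using detpos'[OF assms(1)] assms(4) by simp
  show ya: "yd a < 0"
  proof (rule ccontr)
    assume "\<not> yd a < 0"
    hence "yd a \<ge> 0" by simp
    hence "yd a * xdd a \<ge> 0" using xdd by simp
    thus False using dp by simp
  qed
  fix s assume s: "s \<in> I"
  have "- yd a * (x s - x a) \<ge> 0" using TL'[OF assms(1) s] assms(4) by simp
  thus "x s \<ge> x a" using ya by (simp add: mult_le_0_iff)
qed

end

context cv begin

lemma rightmost: assumes "b \<in> I" "tm \<in> I" "tm < b" "xd b = 0" "\<And>t. tm \<le> t \<Longrightarrow> t < b \<Longrightarrow> xd t > 0"
  shows "\<And>s. s \<in> I \<Longrightarrow> x s \<le> x b" and "yd b > 0"
proof -
  have xdd: "xdd b \<le> 0"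
  proof (rule ccontr)
    assume "\<not> xdd b \<le> 0"
    hence "xdd b > 0" by simp
    from has_real_derivative_pos_inc_left[OF dxd[OF assms(1)] this]
    obtain d where d0: "d > 0" and d: "\<forall>h>0. b - h \<in> I \<longrightarrow> h < d \<longrightarrow> xd (b - h) < xd b"
      by blast
    define h where "h = min (d/2) (b - tm)"
    have h1: "h > 0" unfolding h_def using d0 assms(3) by simp
    have h2: "h < d" unfolding h_def using d0 by simp
    have h3: "b - h \<ge> tm" unfolding h_def by simp
    have "b - h \<in> {tm..b}" using h1 h3 by simp
    hence "b - h \<in> I" by (rule sub_I[OF assms(2,1)])
    hence "xd (b - h) < xd b" using d h1 h2 by blast
    moreover have "xd (b - h) > 0" using assms(5)[of "b-h"] h1 h3 by simp
    ultimately show False using assms(4) by simp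
  qed
  have dp: "- (yd b * xdd b) > 0" using detpos'[OF assms(1)] assms(4) by simp
  show yb: "yd b > 0"
  proof (rule ccontr)
    assume "\<not> yd b > 0"
    hence "yd b \<le> 0" by simp
    hence "yd b * xdd b \<ge> 0" using xdd by (simp add: mult_nonpos_nonpos)
    thus False using dp by simp
  qed
  fix s assume s: "s \<in> I"
  have "- yd b * (x s - x b) \<ge> 0" using TL'[OF assms(1) s] assms(4) by simp
  thus "x s \<le> x b" using yb by (simp add: mult_le_0_iff)
qed

lemma ivt_x: assumes "p \<in> I" "q \<in> I" "p \<le> q" "x p \<le> c" "c \<le> x q"
  shows "\<exists>s. p \<le> s \<and> s \<le> q \<and> x s = c"
proof -
  have "continuous_on {p..q} x" using cx I_int[OF assms(1,2)] continuous_on_subset by blast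
  thus ?thesis using IVT'[of x p c q] assms(3-5) by blast
qed

lemma ivt_x2: assumes "p \<in> I" "q \<in> I" "p \<le> q" "x p \<ge> c" "c \<ge> x q"
  shows "\<exists>s. p \<le> s \<and> s \<le> q \<and> x s = c"
proof -
  have "continuous_on {p..q} x" using cx I_int[OF assms(1,2)] continuous_on_subset by blast
  thus ?thesis using IVT2'[of x q c p] assms(3-5) by blast
qed

end

context cv begin

lemma sig_mul: "xd s \<noteq> 0 \<Longrightarrow> yd s = sig s * xd s" unfolding sig_def by simp

lemma LL: assumes "al \<in> I" "tm \<in> I" "ta \<in> I" "al < tm" "\<And>t. al < t \<Longrightarrow> t \<le> tm \<Longrightarrow> xd t > 0"
  "x al \<le> x ta" "x ta < x tm"
  shows "y ta \<ge> y tm - sig tm * (x tm - x ta) + (x tm - x ta) * (x tm - x ta) / (2*R)"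
proof (rule lim_lemma[of "x tm - x ta" R])
  show "0 < x tm - x ta" using assms(7) by simp
  show "0 < R" by (rule Rpos)
  fix a0 assume a0: "0 < a0" "a0 < x tm - x ta"
  have "\<exists>s. al \<le> s \<and> s \<le> tm \<and> x s = x ta + a0"
    by (rule ivt_x[OF assms(1,2)]) (use assms(4,6) a0 in linarith)+
  then obtain s where s: "al \<le> s" "s \<le> tm" "x s = x ta + a0" by blast
  have "s \<noteq> al"
  proof
    assume "s = al" hence "x al = x ta + a0" using s(3) by simp
    thus False using assms(6) a0(1) by linarith
  qed
  hence s1: "al < s" using s(1) by simp
  have "s \<noteq> tm"
  proof
    assume "s = tm" hence "x tm = x ta + a0" using s(3) by simp
    thus False using a0(2) by linarith
  qed
  hence s2: "s < tm" using s(2) by simp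
  have sI: "s \<in> I" using sub_I[OF assms(1,2)] s(1,2) by simp
  have xs: "xd s > 0" using assms(5) s1 s2 by simp
  define A' where "A' = x tm - x s"
  have A': "x tm - x ta = A' + a0" unfolding A'_def using s(3) by simp
  have t1: "xd s * (y ta - y s) - yd s * (x ta - x s) \<ge> 0" by (rule TL'[OF sI assms(3)])
  have "xd s * (y ta - y s + sig s * a0) \<ge> 0"
  proof -
    have "xd s * (y ta - y s + sig s * a0) = xd s * (y ta - y s) - yd s * (x ta - x s)"
      using sig_mul[of s] xs s(3) by (simp add: algebra_simps)
    thus ?thesis using t1 by simp
  qed
  hence t2: "y ta \<ge> y s - sig s * a0" using xs by (simp add: zero_le_mult_iff)
  have t3: "y s \<ge> y tm + sig tm * (x s - x tm) + (x s - x tm) * (x s - x tm) / (2*R)"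
    by (rule TP_bwd[OF assms(2) sI s2]) (use assms(5) s1 in auto)
  have "G s \<le> G tm"
    by (rule G_mono[OF sI assms(2)]) (use s2 assms(5) s1 in auto)
  hence "sig s \<le> sig tm - A' / R" unfolding G_def A'_def by (simp add: diff_divide_distrib)
  hence t4: "sig s * a0 \<le> (sig tm - A' / R) * a0" using a0 by (simp add: mult_right_mono)
  have e1: "(sig tm - A' / R) * a0 = sig tm * a0 - A' * a0 / R" by (simp add: algebra_simps)
  have f1: "y ta \<ge> y s - sig tm * a0 + A' * a0 / R" using t2 t4 e1 by linarith
  have e2: "y tm + sig tm * (x s - x tm) + (x s - x tm) * (x s - x tm) / (2*R) = y tm - sig tm * A' + A' * A' / (2*R)"
    unfolding A'_def by (simp add: algebra_simps)
  have f2: "y s \<ge> y tm - sig tm * A' + A' * A' / (2*R)" using t3 e2 by linarith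
  have e4: "y tm - sig tm * (A' + a0) + (A' + a0) * (A' + a0) / (2*R) - a0 * a0 / (2*R) = y tm - sig tm * A' - sig tm * a0 + A' * A' / (2*R) + A' * a0 / R"
    using Rpos by (simp add: field_simps)
  show "y ta \<ge> y tm - sig tm * (x tm - x ta) + (x tm - x ta) * (x tm - x ta) / (2*R) - a0 * a0 / (2*R)"
    unfolding A' e4 using f1 f2 by linarith
qed

lemma RL: assumes "be \<in> I" "tm \<in> I" "tb \<in> I" "tm < be" "\<And>t. tm \<le> t \<Longrightarrow> t < be \<Longrightarrow> xd t > 0"
  "x be \<ge> x tb" "x tm < x tb"
  shows "y tb \<ge> y tm + sig tm * (x tb - x tm) + (x tb - x tm) * (x tb - x tm) / (2*R)"
proof (rule lim_lemma[of "x tb - x tm" R])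
  show "0 < x tb - x tm" using assms(7) by simp
  show "0 < R" by (rule Rpos)
  fix b0 assume b0: "0 < b0" "b0 < x tb - x tm"
  have "\<exists>s. tm \<le> s \<and> s \<le> be \<and> x s = x tb - b0"
    by (rule ivt_x[OF assms(2,1)]) (use assms(4,6) b0 in linarith)+
  then obtain s where s: "tm \<le> s" "s \<le> be" "x s = x tb - b0" by blast
  have "s \<noteq> be"
  proof
    assume "s = be" hence "x be = x tb - b0" using s(3) by simp
    thus False using assms(6) b0(1) by linarith
  qed
  hence s2: "s < be" using s(2) by simp
  have "s \<noteq> tm"
  proof
    assume "s = tm" hence "x tm = x tb - b0" using s(3) by simp
    thus False using b0(2) by linarith
  qed
  hence s1: "tm < s" using s(1) by simp
  have sI: "s \<in> I" using sub_I[OF assms(2,1)] s(1,2) by simp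
  have xs: "xd s > 0" using assms(5) s1 s2 by simp
  define B' where "B' = x s - x tm"
  have B': "x tb - x tm = B' + b0" unfolding B'_def using s(3) by simp
  have t1: "xd s * (y tb - y s) - yd s * (x tb - x s) \<ge> 0" by (rule TL'[OF sI assms(3)])
  have "xd s * (y tb - y s - sig s * b0) \<ge> 0"
  proof -
    have "x tb - x s = b0" using s(3) by simp
    moreover have "yd s = sig s * xd s" using sig_mul[of s] xs by simp
    ultimately have "xd s * (y tb - y s - sig s * b0) = xd s * (y tb - y s) - yd s * (x tb - x s)"
      by (simp add: algebra_simps)
    thus ?thesis using t1 by simp
  qed
  hence t2: "y tb \<ge> y s + sig s * b0" using xs by (simp add: zero_le_mult_iff)
  have t3: "y s \<ge> y tm + sig tm * (x s - x tm) + (x s - x tm) * (x s - x tm) / (2*R)"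
    by (rule TP_fwd[OF assms(2) sI s1]) (use assms(5) s2 in auto)
  have "G tm \<le> G s"
    by (rule G_mono[OF assms(2) sI]) (use s1 s2 assms(5) in auto)
  hence "sig s \<ge> sig tm + B' / R" unfolding G_def B'_def by (simp add: diff_divide_distrib)
  hence t4: "sig s * b0 \<ge> (sig tm + B' / R) * b0" using b0 by (simp add: mult_right_mono)
  have e1: "(sig tm + B' / R) * b0 = sig tm * b0 + B' * b0 / R" by (simp add: algebra_simps)
  have f1: "y tb \<ge> y s + sig tm * b0 + B' * b0 / R" using t2 t4 e1 by linarith
  have e2: "y tm + sig tm * (x s - x tm) + (x s - x tm) * (x s - x tm) / (2*R) = y tm + sig tm * B' + B' * B' / (2*R)"
    unfolding B'_def by (simp add: algebra_simps)
  have f2: "y s \<ge> y tm + sig tm * B' + B' * B' / (2*R)" using t3 e2 by linarith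
  have e4: "y tm + sig tm * (B' + b0) + (B' + b0) * (B' + b0) / (2*R) - b0 * b0 / (2*R) = y tm + sig tm * B' + sig tm * b0 + B' * B' / (2*R) + B' * b0 / R"
    using Rpos by (simp add: field_simps)
  show "y tb \<ge> y tm + sig tm * (x tb - x tm) + (x tb - x tm) * (x tb - x tm) / (2*R) - b0 * b0 / (2*R)"
    unfolding B' e4 using f1 f2 by linarith
qed

end


lemma cv_neg: assumes "cv g g1 g2 I R"
  shows "cv (\<lambda>t. - g t) (\<lambda>t. - g1 t) (\<lambda>t. - g2 t) I R"
proof -
  interpret cv g g1 g2 I R by fact
  show ?thesis
  proof
    show "\<And>s t. s \<in> I \<Longrightarrow> t \<in> I \<Longrightarrow> {s..t} \<subseteq> I" by (rule I_int)
    show "closed I" by (rule I_closed)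
    show "((\<lambda>t. - g t) has_vector_derivative - g1 t) (at t within I)" if "t \<in> I" for t
      using has_vector_derivative_minus[OF d1[OF that]] .
    show "((\<lambda>t. - g1 t) has_vector_derivative - g2 t) (at t within I)" if "t \<in> I" for t
      using has_vector_derivative_minus[OF d2[OF that]] .
    show "det2 (- g1 t) (- g2 t) > 0" if "t \<in> I" for t using detpos[OF that] by (simp add: det2_def)
    show "R > 0" by (rule Rpos)
    show "norm (- g1 t) ^ 3 \<le> R * det2 (- g1 t) (- g2 t)" if "t \<in> I" for t
      using curvR[OF that] by (simp add: det2_def)
    show "det2 (- g1 t) (- g s - - g t) \<ge> 0" if "t \<in> I" "s \<in> I" for t s
      using TL[OF that] by (simp add: det2_def algebra_simps)
  qed
qed

context cv begin

lemma cv_self: "cv g g1 g2 I R" by unfold_locales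

lemma x_mono: assumes "p \<in> I" "q \<in> I" "p \<le> q" "\<And>t. t \<in> {p<..<q} \<Longrightarrow> xd t \<ge> 0"
  shows "x p \<le> x q"
proof (rule incr[OF assms(1-3)])
  fix t assume t: "t \<in> {p..q}"
  show "(x has_real_derivative xd t) (at t within I)" by (rule dx[OF sub_I[OF assms(1,2) t]])
qed (use assms(4) in simp)

lemma left_struct: assumes "tm \<in> I" "xd tm > 0"
  shows "(\<forall>t\<in>I. t \<le> tm \<longrightarrow> xd t > 0) \<or> (\<exists>al\<in>I. al < tm \<and> xd al = 0 \<and> (\<forall>t. al < t \<longrightarrow> t \<le> tm \<longrightarrow> xd t > 0))"
proof (cases "\<forall>t\<in>I. t \<le> tm \<longrightarrow> xd t > 0")
  case True thus ?thesis by blast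
next
  case False
  define S where "S = I \<inter> {..tm} \<inter> xd -` {..0}"
  have Sne: "S \<noteq> {}" using False unfolding S_def by force
  have Sbdd: "bdd_above S" unfolding S_def by (rule bdd_aboveI[of _ tm]) auto
  have "closed (I \<inter> {..tm} \<inter> xd -` {..0})"
    using continuous_closed_preimage[OF continuous_on_subset[OF cxd, of "I \<inter> {..tm}"] closed_Int[OF I_closed closed_atMost], of "{..0}"]
    by (simp add: Int_assoc)
  hence Scl: "closed S" unfolding S_def .
  define al where "al = Sup S"
  have alS: "al \<in> S" unfolding al_def by (rule closed_contains_Sup[OF Sne Sbdd Scl])
  hence alI: "al \<in> I" and alt: "al \<le> tm" and alx: "xd al \<le> 0" unfolding S_def by auto
  have allt: "al < tm" using alt alx assms(2) by (metis less_le not_le)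
  have pos: "xd t > 0" if "al < t" "t \<le> tm" for t
  proof (rule ccontr)
    assume "\<not> xd t > 0"
    moreover have "t \<in> I" using sub_I[OF alI assms(1)] that by simp
    ultimately have "t \<in> S" unfolding S_def using that by simp
    hence "t \<le> al" unfolding al_def using Sbdd by (simp add: cSup_upper)
    thus False using that by simp
  qed
  have "xd al = 0"
  proof (rule ccontr)
    assume "xd al \<noteq> 0"
    hence neg: "xd al < 0" using alx by simp
    have "continuous_on {al..tm} xd" using cxd I_int[OF alI assms(1)] continuous_on_subset by blast
    then obtain s where s: "al \<le> s" "s \<le> tm" "xd s = 0"
      using IVT'[of xd al 0 tm] neg assms(2) alt by force
    have "s \<noteq> al" using s(3) neg by auto
    hence "xd s > 0" using pos[of s] s by simp
    thus False using s(3) by simp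
  qed
  thus ?thesis using alI allt pos by blast
qed

lemma right_struct: assumes "tm \<in> I" "xd tm > 0"
  shows "(\<forall>t\<in>I. tm \<le> t \<longrightarrow> xd t > 0) \<or> (\<exists>be\<in>I. tm < be \<and> xd be = 0 \<and> (\<forall>t. tm \<le> t \<longrightarrow> t < be \<longrightarrow> xd t > 0))"
proof (cases "\<forall>t\<in>I. tm \<le> t \<longrightarrow> xd t > 0")
  case True thus ?thesis by blast
next
  case False
  define S where "S = I \<inter> {tm..} \<inter> xd -` {..0}"
  have Sne: "S \<noteq> {}" using False unfolding S_def by force
  have Sbdd: "bdd_below S" unfolding S_def by (rule bdd_belowI[of _ tm]) auto
  have "closed (I \<inter> {tm..} \<inter> xd -` {..0})"
    using continuous_closed_preimage[OF continuous_on_subset[OF cxd, of "I \<inter> {tm..}"] closed_Int[OF I_closed closed_atLeast], of "{..0}"]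
    by (simp add: Int_assoc)
  hence Scl: "closed S" unfolding S_def .
  define be where "be = Inf S"
  have beS: "be \<in> S" unfolding be_def by (rule closed_contains_Inf[OF Sne Sbdd Scl])
  hence beI: "be \<in> I" and bet: "tm \<le> be" and bex: "xd be \<le> 0" unfolding S_def by auto
  have tmbe: "tm < be" using bet bex assms(2) by (metis less_le not_le)
  have pos: "xd t > 0" if "tm \<le> t" "t < be" for t
  proof (rule ccontr)
    assume "\<not> xd t > 0"
    moreover have "t \<in> I" using sub_I[OF assms(1) beI] that by simp
    ultimately have "t \<in> S" unfolding S_def using that by simp
    hence "be \<le> t" unfolding be_def using Sbdd by (simp add: cInf_lower)
    thus False using that by simp
  qed
  have "xd be = 0"
  proof (rule ccontr)
    assume "xd be \<noteq> 0"
    hence neg: "xd be < 0" using bex by simp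
    have "continuous_on {tm..be} xd" using cxd I_int[OF assms(1) beI] continuous_on_subset by blast
    then obtain s where s: "tm \<le> s" "s \<le> be" "xd s = 0"
      using IVT2'[of xd be 0 tm] neg assms(2) bet by force
    have "s \<noteq> be" using s(3) neg by auto
    hence "xd s > 0" using pos[of s] s by simp
    thus False using s(3) by simp
  qed
  thus ?thesis using beI tmbe pos by blast
qed

end


lemma arithL: fixes ya ym s A c \<delta> D R :: real
  assumes "ya \<ge> ym - s*A + A*A/(2*R)" "ya - c < \<delta>" "ym - c > -\<delta>" "A > D" "D > 0" "D*D > 4*R*\<delta>" "R > 0"
  shows "s > 0"
proof -
  have "A*A > D*D" using assms(4,5) by (simp add: mult_strict_mono)
  hence "A*A > 4*R*\<delta>" using assms(6) by linarith
  moreover have "2*\<delta>*(2*R) = 4*R*\<delta>" by simp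
  ultimately have "2*\<delta>*(2*R) < A*A" by linarith
  hence "A*A/(2*R) > 2*\<delta>" using assms(7) by (simp add: pos_less_divide_eq)
  hence "s*A > 0" using assms(1-3) by linarith
  thus "s > 0" using assms(4,5) by (simp add: zero_less_mult_iff)
qed

lemma arithR: fixes yb ym s B c \<delta> D R :: real
  assumes "yb \<ge> ym + s*B + B*B/(2*R)" "yb - c < \<delta>" "ym - c > -\<delta>" "B > D" "D > 0" "D*D > 4*R*\<delta>" "R > 0"
  shows "s < 0"
proof -
  have "B*B > D*D" using assms(4,5) by (simp add: mult_strict_mono)
  hence "B*B > 4*R*\<delta>" using assms(6) by linarith
  moreover have "2*\<delta>*(2*R) = 4*R*\<delta>" by simp
  ultimately have "2*\<delta>*(2*R) < B*B" by linarith
  hence "B*B/(2*R) > 2*\<delta>" using assms(7) by (simp add: pos_less_divide_eq)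
  hence "s*B < 0" using assms(1-3) by linarith
  thus "s < 0" using assms(4,5) by (simp add: mult_less_0_iff)
qed

lemma arithHH: fixes Yv ym sm X xm yo so xo c \<delta> D R :: real
  assumes "Yv \<ge> ym + sm*(X - xm) + (X - xm)*(X - xm)/(2*R)"
    "Yv \<le> yo + so*(X - xo) - (X - xo)*(X - xo)/(2*R)"
    "so*(X - xo) \<le> sm*(X - xo)" "sm*(xm - xo) \<le> 0" "\<bar>X - xo\<bar> > D"
    "ym - c > -\<delta>" "yo - c < \<delta>" "D > 0" "D*D > 4*R*\<delta>" "R > 0"
  shows False
proof -
  have "D*D < \<bar>X - xo\<bar> * \<bar>X - xo\<bar>" by (rule mult_strict_mono) (use assms(5,8) in auto)
  also have "\<bar>X - xo\<bar> * \<bar>X - xo\<bar> = (X - xo)*(X - xo)" by (rule abs_mult_self_eq)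
  finally have "(X - xo)*(X - xo) > 4*R*\<delta>" using assms(9) by linarith
  moreover have "2*\<delta>*(2*R) = 4*R*\<delta>" by simp
  ultimately have "2*\<delta>*(2*R) < (X - xo)*(X - xo)" by linarith
  hence "(X - xo)*(X - xo)/(2*R) > 2*\<delta>" using assms(10) by (simp add: pos_less_divide_eq)
  moreover have "(X - xm)*(X - xm)/(2*R) \<ge> 0" using assms(10) by simp
  moreover have "sm*(X - xo) - sm*(X - xm) = sm*(xm - xo)" by (simp add: algebra_simps)
  ultimately show False using assms(1-4,6,7) by linarith
qed

context cv begin

lemma det_g1: "det2 (g1 s) (g1 t) = xd s * yd t - yd s * xd t"
  by (simp add: det2_def xd_def yd_def)
lemma dot_g1: "fst (g1 s) * fst (g1 t) + snd (g1 s) * snd (g1 t) = xd s * xd t + yd s * yd t"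
  by (simp add: xd_def yd_def)

lemma sig_diff: assumes "xd s \<noteq> 0" "xd t \<noteq> 0"
  shows "(sig t - sig s) * (xd s * xd t) = xd s * yd t - yd s * xd t"
  using assms unfolding sig_def by (simp add: field_simps)

end


definition HT :: "(real \<Rightarrow> real \<times> real) \<Rightarrow> real \<Rightarrow> real \<Rightarrow> bool" where
  "HT g1 a b \<longleftrightarrow> (\<forall>s t. a \<le> s \<longrightarrow> s < t \<longrightarrow> t \<le> b \<longrightarrow> det2 (g1 s) (g1 t) \<ge> 0 \<and>
      (det2 (g1 s) (g1 t) = 0 \<longrightarrow> fst (g1 s) * fst (g1 t) + snd (g1 s) * snd (g1 t) < 0))"

definition EXT :: "(real \<Rightarrow> real \<times> real) \<Rightarrow> (real \<Rightarrow> real \<times> real) \<Rightarrow> real set \<Rightarrow> bool" where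
  "EXT g g1 I \<longleftrightarrow> (I = UNIV \<and> (\<exists>P>0. \<forall>t. g (t + P) = g t)) \<or> (\<exists>a b. a < b \<and> I = {a..b} \<and> HT g1 a b)"

context cv begin

lemma HT_D: assumes "HT g1 a b" "a \<le> s" "s < t" "t \<le> b"
  shows "xd s * yd t - yd s * xd t \<ge> 0" "xd s * yd t - yd s * xd t = 0 \<Longrightarrow> xd s * xd t + yd s * yd t < 0"
  using assms unfolding HT_def det_g1[symmetric] dot_g1[symmetric] by blast+

lemma LLsig: assumes "al \<in> I" "tm \<in> I" "ta \<in> I" "al < tm" "\<And>t. al < t \<Longrightarrow> t \<le> tm \<Longrightarrow> xd t > 0"
  "x al \<le> x ta" "x tm - x ta > D" "y ta - c < \<delta>" "y tm - c > -\<delta>" "D > 0" "D*D > 4*R*\<delta>"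
  shows "sig tm > 0"
proof -
  have "x ta < x tm" using assms(7,10) by linarith
  from LL[OF assms(1-5) assms(6) this] show ?thesis
    by (rule arithL[OF _ assms(8,9,7,10,11) Rpos])
qed

lemma RLsig: assumes "be \<in> I" "tm \<in> I" "tb \<in> I" "tm < be" "\<And>t. tm \<le> t \<Longrightarrow> t < be \<Longrightarrow> xd t > 0"
  "x be \<ge> x tb" "x tb - x tm > D" "y tb - c < \<delta>" "y tm - c > -\<delta>" "D > 0" "D*D > 4*R*\<delta>"
  shows "sig tm < 0"
proof -
  have "x tm < x tb" using assms(7,10) by linarith
  from RL[OF assms(1-5) assms(6) this] show ?thesis
    by (rule arithR[OF _ assms(8,9,7,10,11) Rpos])
qed

lemma periodic_contra: assumes "I = UNIV" "P > 0" "\<And>t. g (t + P) = g t" "p < q" "q = p + P"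
  "\<And>t. p \<le> t \<Longrightarrow> t \<le> q \<Longrightarrow> xd t > 0"
  shows False
proof -
  have "\<And>t. p \<le> t \<Longrightarrow> t \<le> q \<Longrightarrow> (x has_real_derivative xd t) (at t)"
    using dx assms(1) by simp
  from MVT2[OF assms(4) this] obtain z where z: "z > p" "z < q" "x q - x p = (q - p) * xd z" by blast
  have "x q = x p" unfolding x_def using assms(3)[of p] assms(5) by simp
  moreover have "(q - p) * xd z > 0" using z assms(4,6) by simp
  ultimately show False using z(3) by simp
qed

end


context cv begin

lemma H_case: assumes HT: "HT g1 a b" and I: "I = {a..b}"
  and tI: "ta \<in> I" "tm \<in> I" "tb \<in> I"
  and Lnone: "\<And>t. t \<in> I \<Longrightarrow> t \<le> tm \<Longrightarrow> xd t > 0"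
  and be: "be \<in> I" "tm < be" "xd be = 0" "\<And>t. tm \<le> t \<Longrightarrow> t < be \<Longrightarrow> xd t > 0"
  and xa: "x a > x ta"
  and sneg: "sig tm < 0"
  and xs: "x tm - x ta > D" "x tb - x tm > D"
  and ys: "y ta - c < \<delta>" "y tm - c > -\<delta>"
  and dl: "D > 0" "D*D > 4*R*\<delta>"
  shows False
proof -
  interpret r: cv "\<lambda>t. - g t" "\<lambda>t. - g1 t" "\<lambda>t. - g2 t" I R by (rule cv_neg[OF cv_self])
  have rx: "\<And>t. r.x t = - x t" unfolding r.x_def x_def by simp
  have ry: "\<And>t. r.y t = - y t" unfolding r.y_def y_def by simp
  have rxd: "\<And>t. r.xd t = - xd t" unfolding r.xd_def xd_def by simp
  have rsig: "\<And>t. r.sig t = sig t" unfolding r.sig_def sig_def r.xd_def xd_def r.yd_def yd_def by simp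
  have aI: "a \<in> I" "b \<in> I" using I tI by auto
  have atm: "a \<le> tm" "tm \<le> b" "a \<le> ta" "ta \<le> b" using I tI by auto
  have rm1: "x s \<le> x be" if "s \<in> I" for s
    by (rule rightmost(1)[of be tm]) (use be tI that in auto)
  have rm2: "yd be > 0"
    by (rule rightmost(2)[of be tm]) (use be tI in auto)
  have pos_ab: "xd t > 0" if "a \<le> t" "t < be" for t
  proof (cases "t \<le> tm")
    case True thus ?thesis using Lnone[of t] that I be(1) by simp
  next
    case False thus ?thesis using be(4)[of t] that by simp
  qed
  have tabe: "be < ta"
  proof (rule ccontr)
    assume "\<not> be < ta" hence "ta \<le> be" by simp
    have "x a \<le> x ta" by (rule x_mono[OF aI(1) tI(1) atm(3)]) (use pos_ab \<open>ta \<le> be\<close> in \<open>auto intro: less_imp_le\<close>)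
    thus False using xa by simp
  qed
  have xda: "xd a > 0" using pos_ab[of a] be(2) atm(1) by simp
  have ybe: "yd be > 0" by (rule rm2)
  have beb: "be \<le> b" using be(1) I by simp
  have xneg: "xd t < 0" if "be < t" "t \<le> b" for t
  proof -
    have h1: "xd be * yd t - yd be * xd t \<ge> 0" using HT_D(1)[OF HT _ that] be(1) I by simp
    hence "xd t \<le> 0" using be(3) ybe by (simp add: mult_le_0_iff)
    moreover have "xd t \<noteq> 0"
    proof
      assume z: "xd t = 0"
      hence "xd be * xd t + yd be * yd t < 0" using HT_D(2)[OF HT _ that] be(1) I be(3) by simp
      hence "yd t < 0" using z be(3) ybe by (simp add: mult_less_0_iff)
      moreover have "xd a * yd t - yd a * xd t \<ge> 0" using HT_D(1)[OF HT order_refl, of t] that be(2) atm(1) by simp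
      ultimately show False using z xda by (simp add: zero_le_mult_iff)
    qed
    ultimately show ?thesis by simp
  qed
  have xdta: "xd ta < 0" using xneg[of ta] tabe atm(4) by simp
  have s1: "sig ta \<le> sig a"
  proof -
    have "xd a * yd ta - yd a * xd ta \<ge> 0" using HT_D(1)[OF HT order_refl, of ta] tabe be(2) atm(1,4) by simp
    moreover have "(sig ta - sig a) * (xd a * xd ta) = xd a * yd ta - yd a * xd ta"
      by (rule sig_diff) (use xda xdta in auto)
    moreover have "xd a * xd ta < 0" using xda xdta by (simp add: mult_pos_neg)
    ultimately have pr: "(sig ta - sig a) * (xd a * xd ta) \<ge> 0" by simp
    show ?thesis
    proof (rule ccontr)
      assume "\<not> sig ta \<le> sig a"
      hence "sig ta - sig a > 0" by simp
      hence "(sig ta - sig a) * (xd a * xd ta) < 0" using \<open>xd a * xd ta < 0\<close> by (rule mult_pos_neg)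
      thus False using pr by simp
    qed
  qed
  have s2: "sig a \<le> sig tm"
  proof -
    have "G a \<le> G tm" by (rule G_mono[OF aI(1) tI(2) atm(1)]) (use pos_ab be(2) in auto)
    moreover have "x a \<le> x tm" by (rule x_mono[OF aI(1) tI(2) atm(1)]) (use pos_ab be(2) in \<open>auto intro: less_imp_le\<close>)
    moreover have "x a / R \<le> x tm / R" using \<open>x a \<le> x tm\<close> Rpos by (simp add: divide_right_mono)
    ultimately show ?thesis unfolding G_def by linarith
  qed
  have xbe: "x be \<ge> x tb" using rm1[OF tI(3)] .
  have T1: "y be \<ge> y tm + sig tm * (x be - x tm) + (x be - x tm) * (x be - x tm) / (2*R)"
    by (rule TP_fwd[OF tI(2) be(1) be(2)]) (use be(4) in auto)
  have T2: "r.y be \<ge> r.y ta + r.sig ta * (r.x be - r.x ta) + (r.x be - r.x ta) * (r.x be - r.x ta) / (2*R)"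
    by (rule r.TP_bwd[OF tI(1) be(1) tabe]) (use xneg atm(4) rxd in auto)
  have T2': "y be \<le> y ta + sig ta * (x be - x ta) - (x be - x ta) * (x be - x ta) / (2*R)"
  proof -
    have "(r.x be - r.x ta) * (r.x be - r.x ta) = (x be - x ta) * (x be - x ta)" unfolding rx by (simp add: algebra_simps)
    moreover have "r.sig ta * (r.x be - r.x ta) = - (sig ta * (x be - x ta))" unfolding rx rsig by (simp add: algebra_simps)
    ultimately show ?thesis using T2 unfolding ry by simp
  qed
  show False
  proof (rule arithHH[OF T1 T2' _ _ _ _ ys(1) dl Rpos])
    show "sig ta * (x be - x ta) \<le> sig tm * (x be - x ta)"
      by (rule mult_right_mono) (use s1 s2 xbe xs dl in auto)
    show "sig tm * (x tm - x ta) \<le> 0" using sneg xs dl by (simp add: mult_nonpos_nonneg)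
    show "\<bar>x be - x ta\<bar> > D" using xbe xs dl by simp
    show "y tm - c > -\<delta>" by (rule ys(2))
  qed
qed

end


context cv begin

lemma H'_case: assumes HT: "HT g1 a b" and I: "I = {a..b}"
  and tI: "ta \<in> I" "tm \<in> I" "tb \<in> I"
  and Rnone: "\<And>t. t \<in> I \<Longrightarrow> tm \<le> t \<Longrightarrow> xd t > 0"
  and al: "al \<in> I" "al < tm" "xd al = 0" "\<And>t. al < t \<Longrightarrow> t \<le> tm \<Longrightarrow> xd t > 0"
  and xb: "x b < x tb"
  and spos: "sig tm > 0"
  and xs: "x tm - x ta > D" "x tb - x tm > D"
  and ys: "y tb - c < \<delta>" "y tm - c > -\<delta>"
  and dl: "D > 0" "D*D > 4*R*\<delta>"
  shows False
proof -
  interpret r: cv "\<lambda>t. - g t" "\<lambda>t. - g1 t" "\<lambda>t. - g2 t" I R by (rule cv_neg[OF cv_self])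
  have rx: "\<And>t. r.x t = - x t" unfolding r.x_def x_def by simp
  have ry: "\<And>t. r.y t = - y t" unfolding r.y_def y_def by simp
  have rxd: "\<And>t. r.xd t = - xd t" unfolding r.xd_def xd_def by simp
  have rsig: "\<And>t. r.sig t = sig t" unfolding r.sig_def sig_def r.xd_def xd_def r.yd_def yd_def by simp
  have aI: "a \<in> I" "b \<in> I" using I tI by auto
  have atm: "a \<le> tm" "tm \<le> b" "a \<le> tb" "tb \<le> b" using I tI by auto
  have lm1: "x s \<ge> x al" if "s \<in> I" for s
    by (rule leftmost(1)[of al tm]) (use al tI that in auto)
  have lm2: "yd al < 0"
    by (rule leftmost(2)[of al tm]) (use al tI in auto)
  have pos_ab: "xd t > 0" if "al < t" "t \<le> b" for t
  proof (cases "t \<le> tm")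
    case True thus ?thesis using al(4)[of t] that by simp
  next
    case False thus ?thesis using Rnone[of t] that I al(1) by simp
  qed
  have tbal: "tb < al"
  proof (rule ccontr)
    assume "\<not> tb < al" hence "al \<le> tb" by simp
    have "x tb \<le> x b" by (rule x_mono[OF tI(3) aI(2) atm(4)]) (use pos_ab \<open>al \<le> tb\<close> in \<open>auto intro: less_imp_le\<close>)
    thus False using xb by simp
  qed
  have xdb: "xd b > 0" using pos_ab[of b] al(2) atm(2) by simp
  have ala: "a \<le> al" using al(1) I by simp
  have xneg: "xd t < 0" if "a \<le> t" "t < al" for t
  proof -
    have "al \<le> b" using al(1) I by simp
    have h1: "xd t * yd al - yd t * xd al \<ge> 0" using HT_D(1)[OF HT that] \<open>al \<le> b\<close> by simp
    hence "xd t * yd al \<ge> 0" using al(3) by simp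
    hence "xd t \<le> 0" using lm2 by (simp add: zero_le_mult_iff)
    moreover have "xd t \<noteq> 0"
    proof
      assume z: "xd t = 0"
      hence "xd t * xd al + yd t * yd al < 0" using HT_D(2)[OF HT that \<open>al \<le> b\<close>] al(3) by simp
      hence "yd t > 0" using z lm2 by (simp add: mult_less_0_iff)
      moreover have "xd t * yd b - yd t * xd b \<ge> 0" using HT_D(1)[OF HT that(1), of b] that al(2) atm(2) by simp
      ultimately show False using z xdb by (simp add: mult_le_0_iff)
    qed
    ultimately show ?thesis by simp
  qed
  have xdtb: "xd tb < 0" using xneg[of tb] tbal atm(3) by simp
  have s1: "sig b \<le> sig tb"
  proof -
    have "xd tb * yd b - yd tb * xd b \<ge> 0" using HT_D(1)[OF HT atm(3), of b] tbal al(2) atm(2) by simp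
    moreover have "(sig b - sig tb) * (xd tb * xd b) = xd tb * yd b - yd tb * xd b"
      by (rule sig_diff) (use xdb xdtb in auto)
    moreover have "xd tb * xd b < 0" using xdb xdtb by (simp add: mult_neg_pos)
    ultimately have pr: "(sig b - sig tb) * (xd tb * xd b) \<ge> 0" by simp
    show ?thesis
    proof (rule ccontr)
      assume "\<not> sig b \<le> sig tb"
      hence "sig b - sig tb > 0" by simp
      hence "(sig b - sig tb) * (xd tb * xd b) < 0" using \<open>xd tb * xd b < 0\<close> by (rule mult_pos_neg)
      thus False using pr by simp
    qed
  qed
  have s2: "sig tm \<le> sig b"
  proof -
    have "G tm \<le> G b" by (rule G_mono[OF tI(2) aI(2) atm(2)]) (use pos_ab al(2) in auto)
    moreover have "x tm \<le> x b" by (rule x_mono[OF tI(2) aI(2) atm(2)]) (use pos_ab al(2) in \<open>auto intro: less_imp_le\<close>)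
    moreover have "x tm / R \<le> x b / R" using \<open>x tm \<le> x b\<close> Rpos by (simp add: divide_right_mono)
    ultimately show ?thesis unfolding G_def by linarith
  qed
  have xal: "x al \<le> x ta" using lm1[OF tI(1)] .
  have T1: "y al \<ge> y tm + sig tm * (x al - x tm) + (x al - x tm) * (x al - x tm) / (2*R)"
    by (rule TP_bwd[OF tI(2) al(1) al(2)]) (use al(4) in auto)
  have T2: "r.y al \<ge> r.y tb + r.sig tb * (r.x al - r.x tb) + (r.x al - r.x tb) * (r.x al - r.x tb) / (2*R)"
    by (rule r.TP_fwd[OF tI(3) al(1) tbal]) (use xneg atm(3) rxd in auto)
  have T2': "y al \<le> y tb + sig tb * (x al - x tb) - (x al - x tb) * (x al - x tb) / (2*R)"
  proof -
    have "(r.x al - r.x tb) * (r.x al - r.x tb) = (x al - x tb) * (x al - x tb)" unfolding rx by (simp add: algebra_simps)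
    moreover have "r.sig tb * (r.x al - r.x tb) = - (sig tb * (x al - x tb))" unfolding rx rsig by (simp add: algebra_simps)
    ultimately show ?thesis using T2 unfolding ry by simp
  qed
  show False
  proof (rule arithHH[OF T1 T2' _ _ _ ys(2) ys(1) dl Rpos])
    show "sig tb * (x al - x tb) \<le> sig tm * (x al - x tb)"
      by (rule mult_right_mono_neg) (use s1 s2 xal xs dl in auto)
    show "sig tm * (x tm - x tb) \<le> 0" using spos xs dl by (simp add: mult_nonneg_nonpos)
    show "\<bar>x al - x tb\<bar> > D" using xal xs dl by simp
  qed
qed

end


context cv begin

lemma CG_pos: assumes ext: "EXT g g1 I"
  and tI: "ta \<in> I" "tm \<in> I" "tb \<in> I"
  and dl: "\<delta> > 0" "D > 0" "D*D > 4*R*\<delta>"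
  and ys: "\<bar>y ta - c\<bar> < \<delta>" "\<bar>y tm - c\<bar> < \<delta>" "\<bar>y tb - c\<bar> < \<delta>"
  and xs: "x tm - x ta > D" "x tb - x tm > D"
  and pos: "xd tm > 0"
  shows False
proof -
  have ya: "y ta - c < \<delta>" and ym: "y tm - c > -\<delta>" and yb: "y tb - c < \<delta>" using ys by auto
  have Lst: "(\<forall>t\<in>I. t \<le> tm \<longrightarrow> xd t > 0) \<or> (\<exists>al\<in>I. al < tm \<and> xd al = 0 \<and> (\<forall>t. al < t \<longrightarrow> t \<le> tm \<longrightarrow> xd t > 0))"
    by (rule left_struct[OF tI(2) pos])
  have Rst: "(\<forall>t\<in>I. tm \<le> t \<longrightarrow> xd t > 0) \<or> (\<exists>be\<in>I. tm < be \<and> xd be = 0 \<and> (\<forall>t. tm \<le> t \<longrightarrow> t < be \<longrightarrow> xd t > 0))"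
    by (rule right_struct[OF tI(2) pos])
  have both: False if "al \<in> I" "al < tm" "xd al = 0" "\<forall>t. al < t \<longrightarrow> t \<le> tm \<longrightarrow> xd t > 0"
     "be \<in> I" "tm < be" "xd be = 0" "\<forall>t. tm \<le> t \<longrightarrow> t < be \<longrightarrow> xd t > 0" for al be
  proof -
    have xal: "x al \<le> x ta" by (rule leftmost(1)[of al tm]) (use that tI in auto)
    have xbe: "x be \<ge> x tb" by (rule rightmost(1)[of be tm]) (use that tI in auto)
    have "sig tm > 0" by (rule LLsig[OF that(1) tI(2) tI(1) that(2) _ xal xs(1) ya ym dl(2,3)]) (use that(4) in auto)
    moreover have "sig tm < 0" by (rule RLsig[OF that(5) tI(2) tI(3) that(6) _ xbe xs(2) yb ym dl(2,3)]) (use that(8) in auto)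
    ultimately show False by simp
  qed
  from ext show False unfolding EXT_def
  proof
    assume "I = UNIV \<and> (\<exists>P>0. \<forall>t. g (t + P) = g t)"
    then obtain P where I: "I = UNIV" and P: "P > 0" "\<And>t. g (t + P) = g t" by blast
    have L: "\<not> (\<forall>t\<in>I. t \<le> tm \<longrightarrow> xd t > 0)"
    proof
      assume h: "\<forall>t\<in>I. t \<le> tm \<longrightarrow> xd t > 0"
      show False by (rule periodic_contra[OF I P(1) P(2), of "tm - P" tm]) (use P(1) h I in auto)
    qed
    have R: "\<not> (\<forall>t\<in>I. tm \<le> t \<longrightarrow> xd t > 0)"
    proof
      assume h: "\<forall>t\<in>I. tm \<le> t \<longrightarrow> xd t > 0"
      show False by (rule periodic_contra[OF I P(1) P(2), of tm "tm + P"]) (use P(1) h I in auto)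
    qed
    from Lst L obtain al where al: "al \<in> I" "al < tm" "xd al = 0" "\<forall>t. al < t \<longrightarrow> t \<le> tm \<longrightarrow> xd t > 0" by blast
    from Rst R obtain be where be: "be \<in> I" "tm < be" "xd be = 0" "\<forall>t. tm \<le> t \<longrightarrow> t < be \<longrightarrow> xd t > 0" by blast
    show False by (rule both[OF al be])
  next
    assume "\<exists>a b. a < b \<and> I = {a..b} \<and> HT g1 a b"
    then obtain a b where ab: "a < b" and I: "I = {a..b}" and HT: "HT g1 a b" by blast
    have aI: "a \<in> I" "b \<in> I" using ab I by auto
    have atm: "a \<le> tm" "tm \<le> b" "a \<le> ta" "ta \<le> b" "a \<le> tb" "tb \<le> b" using I tI by auto
    show False
    proof (cases "\<forall>t\<in>I. t \<le> tm \<longrightarrow> xd t > 0")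
      case Ln: True
      have Lsig: "sig tm > 0" if "x a \<le> x ta"
      proof (rule LLsig[OF aI(1) tI(2) tI(1) _ _ that xs(1) ya ym dl(2,3)])
        show "a < tm" using that xs dl atm(1) by (metis less_le not_less add_less_same_cancel2 diff_gt_0_iff_gt less_trans)
        show "xd t > 0" if "a < t" "t \<le> tm" for t using Ln that I atm by auto
      qed
      show False
      proof (cases "\<forall>t\<in>I. tm \<le> t \<longrightarrow> xd t > 0")
        case Rn: True
        have allp: "xd t > 0" if "t \<in> I" for t using Ln Rn that by force
        have xa: "x a \<le> x ta" by (rule x_mono[OF aI(1) tI(1) atm(3)]) (use allp I atm in \<open>auto intro: less_imp_le\<close>)
        have "sig tm > 0" by (rule Lsig[OF xa])
        moreover have "sig tm < 0"
        proof (rule RLsig[OF aI(2) tI(2) tI(3) _ _ _ xs(2) yb ym dl(2,3)])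
          show "x b \<ge> x tb" by (rule x_mono[OF tI(3) aI(2) atm(6)]) (use allp I atm in \<open>auto intro: less_imp_le\<close>)
          thus "tm < b" using xs dl atm(2) by (metis less_le not_less add_less_same_cancel2 diff_gt_0_iff_gt less_trans)
          show "xd t > 0" if "tm \<le> t" "t < b" for t using allp that I atm by auto
        qed
        ultimately show False by simp
      next
        case Rv: False
        with Rst obtain be where be: "be \<in> I" "tm < be" "xd be = 0" "\<forall>t. tm \<le> t \<longrightarrow> t < be \<longrightarrow> xd t > 0" by blast
        have xbe: "x be \<ge> x tb" by (rule rightmost(1)[of be tm]) (use be tI in auto)
        have sn: "sig tm < 0" by (rule RLsig[OF be(1) tI(2) tI(3) be(2) _ xbe xs(2) yb ym dl(2,3)]) (use be(4) in auto)
        show False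
        proof (cases "x a \<le> x ta")
          case True thus False using Lsig sn by force
        next
          case False
          show False by (rule H_case[OF HT I tI _ be(1-3) _ _ sn xs ya ym dl(2,3)]) (use Ln be(4) False in auto)
        qed
      qed
    next
      case Lv: False
      with Lst obtain al where al: "al \<in> I" "al < tm" "xd al = 0" "\<forall>t. al < t \<longrightarrow> t \<le> tm \<longrightarrow> xd t > 0" by blast
      have xal: "x al \<le> x ta" by (rule leftmost(1)[of al tm]) (use al tI in auto)
      have sp: "sig tm > 0" by (rule LLsig[OF al(1) tI(2) tI(1) al(2) _ xal xs(1) ya ym dl(2,3)]) (use al(4) in auto)
      show False
      proof (cases "\<forall>t\<in>I. tm \<le> t \<longrightarrow> xd t > 0")
        case Rn: True
        show False
        proof (cases "x b \<ge> x tb")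
          case True
          have "sig tm < 0"
          proof (rule RLsig[OF aI(2) tI(2) tI(3) _ _ True xs(2) yb ym dl(2,3)])
            show "tm < b" using True xs dl atm(2) by (metis less_le not_less add_less_same_cancel2 diff_gt_0_iff_gt less_trans)
            show "xd t > 0" if "tm \<le> t" "t < b" for t using Rn that I atm by auto
          qed
          thus False using sp by simp
        next
          case False
          show False by (rule H'_case[OF HT I tI _ al(1-3) _ _ sp xs yb ym dl(2,3)]) (use Rn al(4) False in auto)
        qed
      next
        case Rv: False
        with Rst obtain be where be: "be \<in> I" "tm < be" "xd be = 0" "\<forall>t. tm \<le> t \<longrightarrow> t < be \<longrightarrow> xd t > 0" by blast
        show False by (rule both[OF al be])
      qed
    qed
  qed
qed

end


lemma EXT_neg: "EXT g g1 I \<Longrightarrow> EXT (\<lambda>t. - g t) (\<lambda>t. - g1 t) I"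
  unfolding EXT_def HT_def by (simp add: det2_def)

context cv begin

lemma CG_std: assumes ext: "EXT g g1 I"
  and tI: "ta \<in> I" "tm \<in> I" "tb \<in> I"
  and dl: "\<delta> > 0" "D > 0" "D*D > 4*R*\<delta>"
  and ys: "\<bar>y ta - c\<bar> < \<delta>" "\<bar>y tm - c\<bar> < \<delta>" "\<bar>y tb - c\<bar> < \<delta>"
  and xs: "x tm - x ta > D" "x tb - x tm > D"
  shows False
proof -
  have "xd tm \<noteq> 0"
  proof
    assume z: "xd tm = 0"
    have o: "x ta < x tm" "x tm < x tb" using xs dl by linarith+
    show False by (rule vert_contra[OF tI(2,1,3) o z])
  qed
  hence "xd tm > 0 \<or> xd tm < 0" by linarith
  thus False
  proof
    assume "xd tm > 0"
    thus False by (rule CG_pos[OF ext tI dl ys xs])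
  next
    assume neg: "xd tm < 0"
    interpret r: cv "\<lambda>t. - g t" "\<lambda>t. - g1 t" "\<lambda>t. - g2 t" I R by (rule cv_neg[OF cv_self])
    have rx: "\<And>t. r.x t = - x t" unfolding r.x_def x_def by simp
    have ry: "\<And>t. r.y t = - y t" unfolding r.y_def y_def by simp
    have rxd: "\<And>t. r.xd t = - xd t" unfolding r.xd_def xd_def by simp
    show False
    proof (rule r.CG_pos[OF EXT_neg[OF ext] tI(3) tI(2) tI(1) dl, of "- c"])
      show "\<bar>r.y tb - - c\<bar> < \<delta>" "\<bar>r.y tm - - c\<bar> < \<delta>" "\<bar>r.y ta - - c\<bar> < \<delta>"
        unfolding ry using ys by (simp_all add: abs_minus_commute)
      show "r.x tm - r.x tb > D" "r.x ta - r.x tm > D" unfolding rx using xs by simp_all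
      show "r.xd tm > 0" unfolding rxd using neg by simp
    qed
  qed
qed

end

definition rot :: "real \<times> real \<Rightarrow> real \<times> real \<Rightarrow> real \<times> real" where
  "rot e v = (fst e * fst v + snd e * snd v, - snd e * fst v + fst e * snd v)"

lemma rot_diff: "rot e (u - v) = rot e u - rot e v"
  by (simp add: rot_def algebra_simps)

lemma rot_det: assumes "(fst e)^2 + (snd e)^2 = 1"
  shows "det2 (rot e u) (rot e v) = det2 u v"
proof -
  have "det2 (rot e u) (rot e v) = ((fst e)^2 + (snd e)^2) * det2 u v"
    by (simp add: rot_def det2_def power2_eq_square algebra_simps)
  thus ?thesis using assms by simp
qed

lemma rot_dot: assumes "(fst e)^2 + (snd e)^2 = 1"
  shows "fst (rot e u) * fst (rot e v) + snd (rot e u) * snd (rot e v) = fst u * fst v + snd u * snd v"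
proof -
  have "fst (rot e u) * fst (rot e v) + snd (rot e u) * snd (rot e v) = ((fst e)^2 + (snd e)^2) * (fst u * fst v + snd u * snd v)"
    by (simp add: rot_def power2_eq_square algebra_simps)
  thus ?thesis using assms by simp
qed

lemma rot_norm: assumes "(fst e)^2 + (snd e)^2 = 1"
  shows "norm (rot e v) = norm v"
proof -
  have "(norm (rot e v))^2 = (fst (rot e v))^2 + (snd (rot e v))^2" by (rule norm_pair_sq)
  also have "\<dots> = ((fst e)^2 + (snd e)^2) * ((fst v)^2 + (snd v)^2)"
    by (simp add: rot_def power2_eq_square algebra_simps)
  also have "\<dots> = (norm v)^2" using assms norm_pair_sq[of v] by simp
  finally show ?thesis by (simp add: power2_eq_iff_nonneg)
qed

lemma rot_linear: "linear (rot e)"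
  by (rule linearI) (simp_all add: rot_def algebra_simps)

lemma rot_bl: "bounded_linear (rot e)"
  using rot_linear linear_conv_bounded_linear by blast

lemma rot_hvd: assumes "(f has_vector_derivative f') F"
  shows "((\<lambda>t. rot e (f t)) has_vector_derivative rot e f') F"
  using bounded_linear.has_vector_derivative[OF rot_bl assms] .

lemma cv_rot: assumes "cv g g1 g2 I R" "(fst e)^2 + (snd e)^2 = 1"
  shows "cv (\<lambda>t. rot e (g t)) (\<lambda>t. rot e (g1 t)) (\<lambda>t. rot e (g2 t)) I R"
proof -
  interpret cv g g1 g2 I R by fact
  show ?thesis
  proof
    show "\<And>s t. s \<in> I \<Longrightarrow> t \<in> I \<Longrightarrow> {s..t} \<subseteq> I" by (rule I_int)
    show "closed I" by (rule I_closed)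
    show "((\<lambda>t. rot e (g t)) has_vector_derivative rot e (g1 t)) (at t within I)" if "t \<in> I" for t
      by (rule rot_hvd[OF d1[OF that]])
    show "((\<lambda>t. rot e (g1 t)) has_vector_derivative rot e (g2 t)) (at t within I)" if "t \<in> I" for t
      by (rule rot_hvd[OF d2[OF that]])
    show "det2 (rot e (g1 t)) (rot e (g2 t)) > 0" if "t \<in> I" for t using detpos[OF that] rot_det[OF assms(2)] by simp
    show "R > 0" by (rule Rpos)
    show "norm (rot e (g1 t)) ^ 3 \<le> R * det2 (rot e (g1 t)) (rot e (g2 t))" if "t \<in> I" for t
      using curvR[OF that] rot_det[OF assms(2)] rot_norm[OF assms(2)] by simp
    show "det2 (rot e (g1 t)) (rot e (g s) - rot e (g t)) \<ge> 0" if "t \<in> I" "s \<in> I" for t s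
      using TL[OF that] rot_det[OF assms(2)] rot_diff[symmetric] by simp
  qed
qed

lemma EXT_rot: assumes "EXT g g1 I" "(fst e)^2 + (snd e)^2 = 1"
  shows "EXT (\<lambda>t. rot e (g t)) (\<lambda>t. rot e (g1 t)) I"
  using assms(1) unfolding EXT_def HT_def rot_det[OF assms(2)] rot_dot[OF assms(2)] by (simp, metis)

lemma CG: assumes cv: "cv g g1 g2 I R" and ext: "EXT g g1 I" and e: "(fst e)^2 + (snd e)^2 = 1"
  and tI: "ta \<in> I" "tm \<in> I" "tb \<in> I"
  and dl: "\<delta> > 0" "D > 0" "D*D > 4*R*\<delta>"
  and ys: "\<bar>snd (rot e (g ta)) - c\<bar> < \<delta>" "\<bar>snd (rot e (g tm)) - c\<bar> < \<delta>" "\<bar>snd (rot e (g tb)) - c\<bar> < \<delta>"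
  and xs: "fst (rot e (g tm)) - fst (rot e (g ta)) > D" "fst (rot e (g tb)) - fst (rot e (g tm)) > D"
  shows False
proof -
  interpret r: cv "\<lambda>t. rot e (g t)" "\<lambda>t. rot e (g1 t)" "\<lambda>t. rot e (g2 t)" I R by (rule cv_rot[OF cv e])
  show False
    by (rule r.CG_std[OF EXT_rot[OF ext e] tI dl, of c]) (use ys xs in \<open>simp_all add: r.x_def r.y_def\<close>)
qed


lemma alg_support: fixes n1 n2 p q r s v1 v2 :: real
  assumes "n1 * p + n2 * q = 0" "n1 * r + n2 * s \<le> 0" "p * s - q * r > 0" "n1 \<noteq> 0 \<or> n2 \<noteq> 0"
    "n1 * v1 + n2 * v2 \<le> 0"
  shows "p * v2 - q * v1 \<ge> 0"
proof -
  define l where "l = n2 * p - n1 * q"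
  define N where "N = p*p + q*q"
  have pq: "p \<noteq> 0 \<or> q \<noteq> 0" using assms(3) by auto
  have Npos: "N > 0" unfolding N_def using pq by (simp add: sum_squares_gt_zero_iff)
  have e1: "N * n1 = - q * l" unfolding N_def l_def
  proof -
    have "(p*p + q*q) * n1 - (- q * (n2 * p - n1 * q)) = p * (n1 * p + n2 * q)" by (simp add: algebra_simps)
    thus "(p*p + q*q) * n1 = - q * (n2 * p - n1 * q)" using assms(1) by simp
  qed
  have e2: "N * n2 = p * l" unfolding N_def l_def
  proof -
    have "(p*p + q*q) * n2 - (p * (n2 * p - n1 * q)) = q * (n1 * p + n2 * q)" by (simp add: algebra_simps)
    thus "(p*p + q*q) * n2 = p * (n2 * p - n1 * q)" using assms(1) by simp
  qed
  have "N * (n1 * r + n2 * s) = (N * n1) * r + (N * n2) * s" by (simp add: algebra_simps)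
  also have "\<dots> = (-q * l) * r + (p * l) * s" using e1 e2 by simp
  also have "\<dots> = l * (p * s - q * r)" by (simp add: algebra_simps)
  finally have eq1: "N * (n1 * r + n2 * s) = l * (p * s - q * r)" .
  have "N * (n1 * r + n2 * s) \<le> 0" by (rule mult_nonneg_nonpos) (use Npos assms(2) in auto)
  hence "l * (p * s - q * r) \<le> 0" using eq1 by simp
  hence lle: "l \<le> 0" using assms(3) by (simp add: mult_le_0_iff)
  have "l \<noteq> 0"
  proof
    assume "l = 0"
    hence "N * n1 = 0" "N * n2 = 0" using e1 e2 by simp_all
    thus False using Npos assms(4) by simp
  qed
  hence lneg: "l < 0" using lle by simp
  have "N * (n1 * v1 + n2 * v2) = (N * n1) * v1 + (N * n2) * v2" by (simp add: algebra_simps)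
  also have "\<dots> = (-q * l) * v1 + (p * l) * v2" using e1 e2 by simp
  also have "\<dots> = l * (p * v2 - q * v1)" by (simp add: algebra_simps)
  finally have eq2: "N * (n1 * v1 + n2 * v2) = l * (p * v2 - q * v1)" .
  have "N * (n1 * v1 + n2 * v2) \<le> 0" by (rule mult_nonneg_nonpos) (use Npos assms(5) in auto)
  hence "l * (p * v2 - q * v1) \<le> 0" using eq2 by simp
  thus ?thesis using lneg by (simp add: mult_le_0_iff)
qed


lemma inner_pair: "(n::real\<times>real) \<bullet> v = fst n * fst v + snd n * snd v"
  by (simp add: inner_prod_def)

lemma hvd_inner: "(f has_vector_derivative f') F \<Longrightarrow> ((\<lambda>s. (n::real\<times>real) \<bullet> f s) has_real_derivative n \<bullet> f') F"
  using bounded_linear.has_vector_derivative[OF bounded_linear_inner_right, of f f' F n]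
  by (simp add: has_real_derivative_iff_has_vector_derivative)

lemma TL_local:
  fixes g g1 g2 :: "real \<Rightarrow> real \<times> real" and n k :: "real \<times> real"
  assumes eps: "\<epsilon> > 0"
  and der1: "\<And>s. s \<in> ball t \<epsilon> \<Longrightarrow> (g has_vector_derivative g1 s) (at s)"
  and der2: "(g1 has_vector_derivative g2 t) (at t)"
  and dp: "det2 (g1 t) (g2 t) > 0"
  and n0: "n \<noteq> 0"
  and mx: "\<And>s. s \<in> ball t \<epsilon> \<Longrightarrow> n \<bullet> g s \<le> n \<bullet> g t"
  and kk: "n \<bullet> k \<le> n \<bullet> g t"
  shows "det2 (g1 t) (k - g t) \<ge> 0"
proof -
  define h where "h s = n \<bullet> g s" for s
  define h1 where "h1 s = n \<bullet> g1 s" for s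
  have dh: "(h has_real_derivative h1 s) (at s)" if "s \<in> ball t \<epsilon>" for s
    unfolding h_def[abs_def] h1_def by (rule hvd_inner[OF der1[OF that]])
  have tb: "t \<in> ball t \<epsilon>" using eps by simp
  have h10: "h1 t = 0"
  proof (rule DERIV_local_max[OF dh[OF tb] eps])
    show "\<forall>y. \<bar>t - y\<bar> < \<epsilon> \<longrightarrow> h y \<le> h t"
      using mx unfolding h_def by (simp add: dist_real_def)
  qed
  have dh1: "(h1 has_real_derivative n \<bullet> g2 t) (at t)" unfolding h1_def[abs_def] by (rule hvd_inner[OF der2])
  have g2n: "n \<bullet> g2 t \<le> 0"
  proof (rule ccontr)
    assume "\<not> n \<bullet> g2 t \<le> 0"
    hence "n \<bullet> g2 t > 0" by simp
    from DERIV_pos_inc_right[OF dh1 this] obtain d where d0: "d > 0" and d: "\<forall>k>0. k < d \<longrightarrow> h1 t < h1 (t + k)" by blast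
    define kk where "kk = min d \<epsilon> / 2"
    have kk: "kk > 0" "kk < d" "kk < \<epsilon>" unfolding kk_def using d0 eps by auto
    have "\<And>x. t \<le> x \<Longrightarrow> x \<le> t + kk \<Longrightarrow> (h has_real_derivative h1 x) (at x)"
      using dh kk by (simp add: dist_real_def)
    from MVT2[of t "t + kk", OF _ this] kk obtain z where z: "t < z" "z < t + kk" "h (t + kk) - h t = (t + kk - t) * h1 z"
      by auto
    have "z - t > 0" "z - t < d" using z kk by auto
    hence "h1 (t + (z - t)) > h1 t" using d by blast
    hence "h1 z > 0" using h10 by simp
    hence "kk * h1 z > 0" using kk(1) by simp
    moreover have "h (t + kk) - h t = kk * h1 z" using z(3) by simp
    ultimately have "h (t + kk) > h t" by linarith
    moreover have "h (t + kk) \<le> h t" using mx[of "t + kk"] kk unfolding h_def by (simp add: dist_real_def)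
    ultimately show False by simp
  qed
  have "fst (g1 t) * snd (k - g t) - snd (g1 t) * fst (k - g t) \<ge> 0"
  proof (rule alg_support)
    show "fst n * fst (g1 t) + snd n * snd (g1 t) = 0" using h10 unfolding h1_def inner_pair .
    show "fst n * fst (g2 t) + snd n * snd (g2 t) \<le> 0" using g2n unfolding inner_pair .
    show "fst (g1 t) * snd (g2 t) - snd (g1 t) * fst (g2 t) > 0" using dp unfolding det2_def .
    show "fst n \<noteq> 0 \<or> snd n \<noteq> 0" using n0 by (simp add: prod_eq_iff)
    show "fst n * fst (k - g t) + snd n * snd (k - g t) \<le> 0" using kk unfolding inner_pair by (simp add: algebra_simps)
  qed
  thus ?thesis unfolding det2_def .
qed


lemma per_deriv: assumes "\<And>t. f (t + P) = f t" "\<And>t. (f has_vector_derivative f' t) (at t)"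
  shows "f' (t + P) = (f' t :: 'a::real_normed_vector)"
proof -
  have "((\<lambda>s. s + P) has_real_derivative 1) (at t)" by (auto intro!: derivative_eq_intros)
  hence s: "((\<lambda>s. s + P) has_vector_derivative 1) (at t)" by (simp add: has_real_derivative_iff_has_vector_derivative)
  have "((f \<circ> (\<lambda>s. s + P)) has_vector_derivative (1 *\<^sub>R f' (t + P))) (at t)"
    by (rule vector_diff_chain_at[OF s]) (use assms(2) in simp)
  moreover have "f \<circ> (\<lambda>s. s + P) = f" using assms(1) by (simp add: fun_eq_iff)
  ultimately have "(f has_vector_derivative f' (t + P)) (at t)" by simp
  thus ?thesis using assms(2) vector_derivative_unique_at by metis
qed

lemma per_nat: fixes t P :: real assumes "\<And>t. f (t + P) = f t" shows "f (t + real n * P) = f t"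
proof (induction n)
  case 0 thus ?case by simp
next
  case (Suc n)
  have "f (t + real (Suc n) * P) = f ((t + real n * P) + P)" by (simp add: algebra_simps)
  also have "\<dots> = f (t + real n * P)" by (rule assms)
  finally show ?case using Suc by simp
qed

lemma per_int: fixes t P :: real assumes "\<And>t. f (t + P) = f t" shows "f (t + real_of_int k * P) = f t"
proof (cases "k \<ge> 0")
  case True
  then obtain n where "k = int n" by (metis nonneg_eq_int)
  thus ?thesis using per_nat[where f=f and P=P, OF assms] by simp
next
  case False
  then obtain n where k: "k = - int n" by (metis nonneg_eq_int neg_0_le_iff_le le_cases minus_minus)
  have "f t = f ((t + real_of_int k * P) + real n * P)" using k by simp
  also have "\<dots> = f (t + real_of_int k * P)" by (rule per_nat[where f=f and P=P, OF assms])
  finally show ?thesis by simp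
qed

lemma per_reduce: fixes t P a :: real assumes "P > 0" "\<And>t. f (t + P) = f t"
  shows "\<exists>t'. a \<le> t' \<and> t' \<le> a + P \<and> f t = f t'"
proof -
  define k where "k = \<lfloor>(t - a) / P\<rfloor>"
  define t' where "t' = t - real_of_int k * P"
  have "real_of_int k \<le> (t - a) / P" unfolding k_def by simp
  hence 1: "real_of_int k * P \<le> t - a" using assms(1) by (simp add: pos_le_divide_eq)
  have "(t - a) / P < real_of_int k + 1" unfolding k_def by linarith
  hence 2: "t - a < (real_of_int k + 1) * P" using assms(1) by (simp add: pos_divide_less_eq)
  have "f t = f (t' + real_of_int k * P)" unfolding t'_def by simp
  also have "\<dots> = f t'" by (rule per_int[where f=f and P=P, OF assms(2)])
  finally have "f t = f t'" .
  moreover have "a \<le> t'" "t' \<le> a + P" using 1 2 unfolding t'_def by (simp_all add: algebra_simps)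
  ultimately show ?thesis by blast
qed

lemma curv_facts: assumes "curvature g1 g2 t > 0" "g1 t \<noteq> 0" "1 / curvature g1 g2 t \<le> R"
  shows "det2 (g1 t) (g2 t) > 0" "norm (g1 t)^3 \<le> R * det2 (g1 t) (g2 t)"
proof -
  have N: "norm (g1 t)^3 > 0" using assms(2) by simp
  show dp: "det2 (g1 t) (g2 t) > 0" using assms(1) N unfolding curvature_def by (simp add: zero_less_divide_iff)
  have "1 / curvature g1 g2 t = norm (g1 t)^3 / det2 (g1 t) (g2 t)" unfolding curvature_def by simp
  hence "norm (g1 t)^3 / det2 (g1 t) (g2 t) \<le> R" using assms(3) by simp
  thus "norm (g1 t)^3 \<le> R * det2 (g1 t) (g2 t)" using dp by (simp add: pos_divide_le_eq mult.commute)
qed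

lemma support_frontier: fixes K :: "(real \<times> real) set"
  assumes "convex K" "interior K \<noteq> {}" "p \<in> frontier K"
  shows "\<exists>n. n \<noteq> 0 \<and> (\<forall>y\<in>closure K. n \<bullet> y \<le> n \<bullet> p)"
proof -
  have "p \<in> closure K" "p \<notin> rel_interior K"
    using assms(3) rel_interior_nonempty_interior[OF assms(2)] unfolding frontier_def by auto
  from supporting_hyperplane_relative_frontier[OF assms(1) this] obtain a where
    "a \<noteq> 0" "\<And>y. y \<in> closure K \<Longrightarrow> a \<bullet> p \<le> a \<bullet> y" by metis
  thus ?thesis by (intro exI[of _ "- a"]) auto
qed


lemma closed_pkg: assumes cc: "closed_convex_curve g g1 g2 a b"
  and rho: "\<forall>t\<in>{a..b}. 1 / curvature g1 g2 t \<le> R" and Rp: "R > 0"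
  shows "cv g g1 g2 UNIV R" "EXT g g1 UNIV"
proof -
  from cc have ab: "a < b" and per: "\<And>t. g (t + (b - a)) = g t"
    and d1: "\<And>t. (g has_vector_derivative g1 t) (at t)"
    and d2: "\<And>t. (g1 has_vector_derivative g2 t) (at t)"
    and nz: "\<And>t. g1 t \<noteq> 0 \<and> g2 t \<noteq> 0 \<and> curvature g1 g2 t > 0"
    unfolding closed_convex_curve_def by auto
  from cc obtain K where K: "convex K" "compact K" "interior K \<noteq> {}" "g ` {a..b} = frontier K"
    unfolding closed_convex_curve_def by auto
  define P where "P = b - a"
  have P: "P > 0" using ab P_def by simp
  have per': "\<And>t. g (t + P) = g t" using per P_def by simp
  have per1: "\<And>t. g1 (t + P) = g1 t" by (rule per_deriv[OF per' d1])
  have per2: "\<And>t. g2 (t + P) = g2 t" by (rule per_deriv[OF per1 d2])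
  have red: "\<exists>t'. a \<le> t' \<and> t' \<le> b \<and> g t = g t' \<and> g1 t = g1 t' \<and> g2 t = g2 t'" for t
  proof -
    have "\<And>t. (\<lambda>t. (g t, g1 t, g2 t)) (t + P) = (\<lambda>t. (g t, g1 t, g2 t)) t" using per' per1 per2 by simp
    from per_reduce[where f="\<lambda>t. (g t, g1 t, g2 t)" and P=P and t=t and a=a, OF P this] show ?thesis unfolding P_def by auto
  qed
  have gK: "g s \<in> frontier K" for s using red[of s] K(4) by force
  have dpos: "det2 (g1 t) (g2 t) > 0" and cR: "norm (g1 t)^3 \<le> R * det2 (g1 t) (g2 t)" for t
  proof -
    obtain t' where t': "a \<le> t'" "t' \<le> b" "g1 t = g1 t'" "g2 t = g2 t'" using red[of t] by blast
    have "1 / curvature g1 g2 t' \<le> R" using rho t' by simp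
    note cf = curv_facts[of g1 g2 t' R, OF _ _ this]
    show "det2 (g1 t) (g2 t) > 0" using cf(1) nz[of t'] t' by simp
    show "norm (g1 t)^3 \<le> R * det2 (g1 t) (g2 t)" using cf(2) nz[of t'] t' by simp
  qed
  have clK: "closure K = K" using K(2) by (simp add: compact_imp_closed closure_closed)
  have TL: "det2 (g1 t) (g s - g t) \<ge> 0" for t s
  proof -
    obtain n where n: "n \<noteq> 0" "\<forall>y\<in>closure K. n \<bullet> y \<le> n \<bullet> g t"
      using support_frontier[OF K(1) K(3) gK[of t]] by blast
    have inK: "g u \<in> closure K" for u using gK[of u] unfolding frontier_def by blast
    show ?thesis
    proof (rule TL_local[of 1 t g g1 g2 n])
      show "(g has_vector_derivative g1 s) (at s)" for s by (rule d1)
      show "(g1 has_vector_derivative g2 t) (at t)" by (rule d2)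
      show "det2 (g1 t) (g2 t) > 0" by (rule dpos)
      show "n \<noteq> 0" by (rule n(1))
      show "n \<bullet> g u \<le> n \<bullet> g t" for u using n(2) inK by blast
      show "n \<bullet> g s \<le> n \<bullet> g t" using n(2) inK by blast
    qed simp
  qed
  show "cv g g1 g2 UNIV R"
  proof
    show "closed (UNIV :: real set)" by simp
  qed (use d1 d2 dpos Rp cR TL in auto)
  show "EXT g g1 UNIV" unfolding EXT_def using per' P by blast
qed


lemma arc_cv: assumes ca: "convex_arc g g1 g2 a b"
  and rho: "\<forall>t\<in>{a..b}. 1 / curvature g1 g2 t \<le> R" and Rp: "R > 0"
  shows "cv g g1 g2 {a..b} R"
proof -
  from ca have ab: "a < b"
    and d1: "\<And>t. t \<in> {a..b} \<Longrightarrow> (g has_vector_derivative g1 t) (at t within {a..b})"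
    and d2: "\<And>t. t \<in> {a..b} \<Longrightarrow> (g1 has_vector_derivative g2 t) (at t within {a..b})"
    and nz: "\<And>t. t \<in> {a..b} \<Longrightarrow> g1 t \<noteq> 0 \<and> g2 t \<noteq> 0 \<and> curvature g1 g2 t > 0"
    unfolding convex_arc_def by auto
  from ca obtain K where K: "convex K" "interior K \<noteq> {}" "g ` {a..b} \<subseteq> frontier K"
    unfolding convex_arc_def by auto
  have dpos: "det2 (g1 t) (g2 t) > 0" and cR: "norm (g1 t)^3 \<le> R * det2 (g1 t) (g2 t)" if "t \<in> {a..b}" for t
  proof -
    have "1 / curvature g1 g2 t \<le> R" using rho that by simp
    note cf = curv_facts[of g1 g2 t R, OF _ _ this]
    show "det2 (g1 t) (g2 t) > 0" using cf(1) nz[OF that] by simp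
    show "norm (g1 t)^3 \<le> R * det2 (g1 t) (g2 t)" using cf(2) nz[OF that] by simp
  qed
  have cg: "continuous_on {a..b} g"
    using d1 continuous_on_eq_continuous_within has_vector_derivative_continuous by blast
  have cg1: "continuous_on {a..b} g1"
    using d2 continuous_on_eq_continuous_within has_vector_derivative_continuous by blast
  have gK: "g s \<in> closure K" if "s \<in> {a..b}" for s using K(3) that unfolding frontier_def by blast
  have TLi: "det2 (g1 t) (g s - g t) \<ge> 0" if t: "t \<in> {a<..<b}" and s: "s \<in> {a..b}" for t s
  proof -
    have tab: "t \<in> {a..b}" using t by simp
    obtain n where n: "n \<noteq> 0" "\<forall>y\<in>closure K. n \<bullet> y \<le> n \<bullet> g t"
      using support_frontier[OF K(1) K(2), of "g t"] K(3) tab by blast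
    define e where "e = min (t - a) (b - t)"
    have e0: "e > 0" unfolding e_def using t by simp
    have ball: "ball t e \<subseteq> {a<..<b}" unfolding e_def ball_def dist_real_def by auto
    have atu: "at u within {a..b} = at u" if "u \<in> {a<..<b}" for u
      using that at_within_interior[of u "{a..b}"] by simp
    show ?thesis
    proof (rule TL_local[OF e0])
      show "(g has_vector_derivative g1 u) (at u)" if "u \<in> ball t e" for u
        using d1[of u] atu[of u] ball that by auto
      show "(g1 has_vector_derivative g2 t) (at t)" using d2[OF tab] atu[OF t] by simp
      show "det2 (g1 t) (g2 t) > 0" by (rule dpos[OF tab])
      show "n \<noteq> 0" by (rule n(1))
      show "n \<bullet> g u \<le> n \<bullet> g t" if "u \<in> ball t e" for u using n(2) gK[of u] ball that by auto
      show "n \<bullet> g s \<le> n \<bullet> g t" using n(2) gK[OF s] by blast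
    qed
  qed
  have TL: "det2 (g1 t) (g s - g t) \<ge> 0" if t: "t \<in> {a..b}" and s: "s \<in> {a..b}" for t s
  proof -
    have cl: "closure {a<..<b} = {a..b}" using ab by simp
    have "continuous_on {a..b} (\<lambda>t. fst (g1 t) * snd (g s - g t) - snd (g1 t) * fst (g s - g t))"
      by (intro continuous_intros cg cg1)
    hence "continuous_on (closure {a<..<b}) (\<lambda>t. det2 (g1 t) (g s - g t))" unfolding cl det2_def .
    from continuous_ge_on_closure[OF this, of t 0] show ?thesis using TLi[OF _ s] t cl by auto
  qed
  show ?thesis
  proof
    show "\<And>s t. s \<in> {a..b} \<Longrightarrow> t \<in> {a..b} \<Longrightarrow> {s..t} \<subseteq> {a..b}" by auto
  qed (use d1 d2 dpos Rp cR TL in auto)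
qed


lemma norm_pair_sqrt: "norm (v::real\<times>real) = sqrt (fst v * fst v + snd v * snd v)"
  by (simp add: norm_prod_def power2_eq_square)

lemma key_identity: fixes p q r sv Vx Vy f :: real
  assumes "f * (p * p + q * q) = p * sv - q * r"
  shows "2 * ((r * Vx + p * (- f * Vy)) + (sv * Vy + q * (f * Vx))) * (p * p + q * q)
          - (p * Vx + q * Vy) * (2 * p * r + 2 * q * sv) = 0"
proof -
  have "2 * ((r * Vx + p * (- f * Vy)) + (sv * Vy + q * (f * Vx))) * (p * p + q * q)
        = 2 * (r * Vx + sv * Vy) * (p * p + q * q) + 2 * (f * (p * p + q * q)) * (q * Vx - p * Vy)"
    by (simp add: algebra_simps)
  also have "\<dots> = 2 * (r * Vx + sv * Vy) * (p * p + q * q) + 2 * (p * sv - q * r) * (q * Vx - p * Vy)"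
    using assms by simp
  also have "\<dots> = (p * Vx + q * Vy) * (2 * p * r + 2 * q * sv)" by (simp add: algebra_simps)
  finally show ?thesis by simp
qed


lemma rep_const:
  fixes p q r sv \<psi> f :: "real \<Rightarrow> real" and a b c0 s0 :: real
  assumes dp: "\<And>t. t \<in> {a..b} \<Longrightarrow> (p has_real_derivative r t) (at t within {a..b})"
    and dq: "\<And>t. t \<in> {a..b} \<Longrightarrow> (q has_real_derivative sv t) (at t within {a..b})"
    and dpsi: "\<And>t. t \<in> {a..b} \<Longrightarrow> (\<psi> has_real_derivative f t) (at t within {a..b})"
    and ff: "\<And>t. t \<in> {a..b} \<Longrightarrow> f t * (p t * p t + q t * q t) = p t * sv t - q t * r t"
    and Sp: "\<And>t. t \<in> {a..b} \<Longrightarrow> p t * p t + q t * q t > 0"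
  shows "\<exists>c. \<forall>t\<in>{a..b}. (p t * (cos (\<psi> t) * c0 - sin (\<psi> t) * s0) + q t * (sin (\<psi> t) * c0 + cos (\<psi> t) * s0))
        * (p t * (cos (\<psi> t) * c0 - sin (\<psi> t) * s0) + q t * (sin (\<psi> t) * c0 + cos (\<psi> t) * s0))
        / (p t * p t + q t * q t) = c"
proof -
  define C where "C t = cos (\<psi> t)" for t
  define Sn where "Sn t = sin (\<psi> t)" for t
  define Vx where "Vx t = C t * c0 - Sn t * s0" for t
  define Vy where "Vy t = Sn t * c0 + C t * s0" for t
  define E where "E t = p t * Vx t + q t * Vy t" for t
  define Sq where "Sq t = p t * p t + q t * q t" for t
  define I where "I = {a..b}"
  have main: "((\<lambda>t. E t * E t / Sq t) has_real_derivative 0) (at t within I)" if t: "t \<in> I" for t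
  proof -
    have tt: "t \<in> {a..b}" using t I_def by simp
    have dC: "(C has_real_derivative - Sn t * f t) (at t within I)"
      unfolding C_def[abs_def] Sn_def I_def by (rule DERIV_chain2[OF DERIV_cos dpsi[OF tt]])
    have dS: "(Sn has_real_derivative C t * f t) (at t within I)"
      unfolding C_def Sn_def[abs_def] I_def by (rule DERIV_chain2[OF DERIV_sin dpsi[OF tt]])
    have dVx: "(Vx has_real_derivative (- Sn t * f t) * c0 - (C t * f t) * s0) (at t within I)"
      unfolding Vx_def[abs_def] by (rule DERIV_diff[OF DERIV_cmult_right[OF dC] DERIV_cmult_right[OF dS]])
    have dVy: "(Vy has_real_derivative (C t * f t) * c0 + (- Sn t * f t) * s0) (at t within I)"
      unfolding Vy_def[abs_def] by (rule DERIV_add[OF DERIV_cmult_right[OF dS] DERIV_cmult_right[OF dC]])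
    have dp': "(p has_real_derivative r t) (at t within I)" using dp[OF tt] I_def by simp
    have dq': "(q has_real_derivative sv t) (at t within I)" using dq[OF tt] I_def by simp
    define Ed where "Ed = r t * Vx t + ((- Sn t * f t) * c0 - (C t * f t) * s0) * p t
       + (sv t * Vy t + ((C t * f t) * c0 + (- Sn t * f t) * s0) * q t)"
    have dE: "(E has_real_derivative Ed) (at t within I)"
      unfolding E_def[abs_def] Ed_def by (rule DERIV_add[OF DERIV_mult[OF dp' dVx] DERIV_mult[OF dq' dVy]])
    define Sd where "Sd = r t * p t + r t * p t + (sv t * q t + sv t * q t)"
    have dSq: "(Sq has_real_derivative Sd) (at t within I)"
      unfolding Sq_def[abs_def] Sd_def by (rule DERIV_add[OF DERIV_mult[OF dp' dp'] DERIV_mult[OF dq' dq']])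
    have dEE: "((\<lambda>t. E t * E t) has_real_derivative Ed * E t + Ed * E t) (at t within I)"
      by (rule DERIV_mult[OF dE dE])
    have Sq0: "Sq t \<noteq> 0" using Sp[OF tt] unfolding Sq_def by (metis less_irrefl)
    have dQ: "((\<lambda>t. E t * E t / Sq t) has_real_derivative ((Ed * E t + Ed * E t) * Sq t - E t * E t * Sd) / (Sq t * Sq t)) (at t within I)"
      by (rule DERIV_divide[OF dEE dSq Sq0])
    have Ed_eq: "Ed = (r t * Vx t + p t * (- f t * Vy t)) + (sv t * Vy t + q t * (f t * Vx t))"
      unfolding Ed_def Vx_def Vy_def by (simp add: algebra_simps)
    have Sd_eq: "Sd = 2 * p t * r t + 2 * q t * sv t" unfolding Sd_def by (simp add: algebra_simps)
    have K: "2 * ((r t * Vx t + p t * (- f t * Vy t)) + (sv t * Vy t + q t * (f t * Vx t))) * (p t * p t + q t * q t)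
          - (p t * Vx t + q t * Vy t) * (2 * p t * r t + 2 * q t * sv t) = 0"
      by (rule key_identity[OF ff[OF tt]])
    have "(Ed * E t + Ed * E t) * Sq t - E t * E t * Sd = E t * (2 * Ed * Sq t - E t * Sd)"
      by (simp add: algebra_simps)
    also have "2 * Ed * Sq t - E t * Sd = 0" using K unfolding Ed_eq Sd_eq E_def Sq_def by (simp add: algebra_simps)
    finally have z: "(Ed * E t + Ed * E t) * Sq t - E t * E t * Sd = 0" by simp
    show ?thesis using dQ unfolding z by simp
  qed
  have "\<exists>c. \<forall>t\<in>I. E t * E t / Sq t = c"
    by (rule has_field_derivative_zero_constant) (use main I_def in auto)
  thus ?thesis unfolding E_def Vx_def Vy_def C_def Sn_def Sq_def I_def .
qed


lemma trig_det: fixes c0 s0 x y :: real assumes "c0 * c0 + s0 * s0 = 1"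
  shows "(cos x * c0 - sin x * s0) * (sin y * c0 + cos y * s0) - (sin x * c0 + cos x * s0) * (cos y * c0 - sin y * s0) = sin (y - x)"
proof -
  have "(cos x * c0 - sin x * s0) * (sin y * c0 + cos y * s0) - (sin x * c0 + cos x * s0) * (cos y * c0 - sin y * s0)
       = (c0 * c0 + s0 * s0) * (sin y * cos x - cos y * sin x)" by (simp add: algebra_simps)
  thus ?thesis using assms by (simp add: sin_diff)
qed

lemma trig_dot: fixes c0 s0 x y :: real assumes "c0 * c0 + s0 * s0 = 1"
  shows "(cos x * c0 - sin x * s0) * (cos y * c0 - sin y * s0) + (sin x * c0 + cos x * s0) * (sin y * c0 + cos y * s0) = cos (y - x)"
proof -
  have "(cos x * c0 - sin x * s0) * (cos y * c0 - sin y * s0) + (sin x * c0 + cos x * s0) * (sin y * c0 + cos y * s0)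
       = (c0 * c0 + s0 * s0) * (cos y * cos x + sin y * sin x)" by (simp add: algebra_simps)
  thus ?thesis using assms by (simp add: cos_diff)
qed

lemma trig_unit: fixes c0 s0 x :: real assumes "c0 * c0 + s0 * s0 = 1"
  shows "(cos x * c0 - sin x * s0) * (cos x * c0 - sin x * s0) + (sin x * c0 + cos x * s0) * (sin x * c0 + cos x * s0) = 1"
  using trig_dot[OF assms, of x x] by simp

lemma angle_facts: fixes D :: real assumes "0 < D" "D \<le> pi"
  shows "sin D \<ge> 0" "sin D = 0 \<Longrightarrow> cos D < 0"
proof -
  show "sin D \<ge> 0" using assms by (simp add: sin_ge_zero)
  assume z: "sin D = 0"
  have "D = pi"
  proof (rule ccontr)
    assume "D \<noteq> pi" hence "D < pi" using assms by simp
    hence "sin D > 0" using assms by (simp add: sin_gt_zero)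
    thus False using z by simp
  qed
  thus "cos D < 0" by simp
qed


lemma arc_HT: assumes ca: "convex_arc g g1 g2 a b" and tc: "total_curvature g1 g2 a b \<le> pi"
  shows "HT g1 a b"
proof -
  from ca have ab: "a < b"
    and d2: "\<And>t. t \<in> {a..b} \<Longrightarrow> (g1 has_vector_derivative g2 t) (at t within {a..b})"
    and cg2: "continuous_on {a..b} g2"
    and nz: "\<And>t. t \<in> {a..b} \<Longrightarrow> g1 t \<noteq> 0 \<and> g2 t \<noteq> 0 \<and> curvature g1 g2 t > 0"
    unfolding convex_arc_def by auto
  define I where "I = {a..b}"
  have cg1: "continuous_on I g1"
    using d2 continuous_on_eq_continuous_within has_vector_derivative_continuous unfolding I_def by blast
  define p where "p t = fst (g1 t)" for t
  define q where "q t = snd (g1 t)" for t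
  define r where "r t = fst (g2 t)" for t
  define sv where "sv t = snd (g2 t)" for t
  define f where "f t = curvature g1 g2 t * norm (g1 t)" for t
  define Sq where "Sq t = p t * p t + q t * q t" for t
  have Nsq: "norm (g1 t) * norm (g1 t) = Sq t" for t
    unfolding Sq_def p_def q_def norm_pair_sqrt by simp
  have Npos: "norm (g1 t) > 0" if "t \<in> I" for t using nz[of t] that I_def by simp
  have Sp: "Sq t > 0" if "t \<in> I" for t
  proof -
    have "norm (g1 t) * norm (g1 t) > 0" using Npos[OF that] by simp
    thus ?thesis using Nsq[of t] by simp
  qed
  have cf: "continuous_on I f"
  proof -
    have "continuous_on I (\<lambda>t. (fst (g1 t) * snd (g2 t) - snd (g1 t) * fst (g2 t)) / norm (g1 t) ^ 3 * norm (g1 t))"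
      by (intro continuous_intros cg1 cg2[folded I_def]) (use Npos in auto)
    thus ?thesis unfolding f_def[abs_def] curvature_def det2_def .
  qed
  have fpos: "f t > 0" if "t \<in> I" for t unfolding f_def using nz[of t] Npos[OF that] that I_def by simp
  have ff: "f t * Sq t = p t * sv t - q t * r t" if "t \<in> I" for t
  proof -
    have N3: "norm (g1 t) ^ 3 = Sq t * norm (g1 t)" using Nsq[of t] by (simp add: power3_eq_cube)
    have "f t = (p t * sv t - q t * r t) / (Sq t * norm (g1 t)) * norm (g1 t)"
      unfolding f_def curvature_def det2_def N3 p_def q_def r_def sv_def by simp
    also have "\<dots> = (p t * sv t - q t * r t) / Sq t" using Npos[OF that] by simp
    finally show ?thesis using Sp[OF that] by simp
  qed
  define \<psi> where "\<psi> t = integral {a..t} f" for t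
  have dpsi: "(\<psi> has_real_derivative f t) (at t within I)" if "t \<in> I" for t
    unfolding \<psi>_def[abs_def] I_def by (rule integral_has_real_derivative) (use cf that I_def in auto)
  have psia: "\<psi> a = 0" unfolding \<psi>_def by simp
  have psib: "\<psi> b \<le> pi" using tc unfolding \<psi>_def total_curvature_def f_def .
  have cpsi: "continuous_on I \<psi>" using dpsi continuous_on_eq_continuous_within DERIV_continuous by blast
  have psi_mono: "\<psi> s < \<psi> t" if "s \<in> I" "t \<in> I" "s < t" for s t
  proof (rule DERIV_pos_imp_increasing_open[OF that(3)])
    fix z assume z: "s < z" "z < t"
    hence zi: "z \<in> {a<..<b}" using that I_def by auto
    hence "at z within I = at z" unfolding I_def using at_within_interior[of z "{a..b}"] by simp
    moreover have "z \<in> I" using zi I_def by auto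
    ultimately show "\<exists>y. (\<psi> has_real_derivative y) (at z) \<and> y > 0" using dpsi fpos by metis
  next
    have "{s..t} \<subseteq> I" using that I_def by auto
    thus "continuous_on {s..t} \<psi>" using cpsi continuous_on_subset by blast
  qed
  define N where "N t = norm (g1 t)" for t
  define c0 where "c0 = p a / N a"
  define s0 where "s0 = q a / N a"
  have aI: "a \<in> I" "b \<in> I" using ab I_def by auto
  have NNa: "N a * N a = Sq a" using Nsq[of a] N_def by simp
  have Na0: "N a \<noteq> 0" using Npos[OF aI(1)] N_def by simp
  have "c0 * c0 + s0 * s0 = (p a * p a + q a * q a) / (N a * N a)"
    unfolding c0_def s0_def by (simp add: add_divide_distrib)
  also have "\<dots> = Sq a / Sq a" unfolding NNa Sq_def ..
  also have "\<dots> = 1" using Sp[OF aI(1)] by simp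
  finally have cs: "c0 * c0 + s0 * s0 = 1" .
  define Vx where "Vx t = cos (\<psi> t) * c0 - sin (\<psi> t) * s0" for t
  define Vy where "Vy t = sin (\<psi> t) * c0 + cos (\<psi> t) * s0" for t
  define E where "E t = p t * Vx t + q t * Vy t" for t
  have dp: "(p has_real_derivative r t) (at t within {a..b})" if "t \<in> {a..b}" for t
    unfolding p_def[abs_def] r_def using hvd_fst[OF d2[OF that]] .
  have dq: "(q has_real_derivative sv t) (at t within {a..b})" if "t \<in> {a..b}" for t
    unfolding q_def[abs_def] sv_def using hvd_snd[OF d2[OF that]] .
  have dpsi': "(\<psi> has_real_derivative f t) (at t within {a..b})" if "t \<in> {a..b}" for t
    using dpsi[of t] that I_def by simp
  have ff': "f t * (p t * p t + q t * q t) = p t * sv t - q t * r t" if "t \<in> {a..b}" for t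
    using ff[of t] that I_def Sq_def by simp
  have Sp': "p t * p t + q t * q t > 0" if "t \<in> {a..b}" for t
    using Sp[of t] that I_def Sq_def by simp
  have "\<exists>c. \<forall>t\<in>{a..b}. E t * E t / Sq t = c"
    unfolding E_def Vx_def Vy_def Sq_def by (rule rep_const[OF dp dq dpsi' ff' Sp'])
  then obtain c where c: "\<And>t. t \<in> {a..b} \<Longrightarrow> E t * E t / Sq t = c" by blast
  have "E a = p a * c0 + q a * s0" unfolding E_def Vx_def Vy_def psia by simp
  also have "\<dots> = (p a * p a + q a * q a) / N a" unfolding c0_def s0_def by (simp add: add_divide_distrib)
  also have "\<dots> = N a" using NNa Na0 unfolding Sq_def by (simp add: divide_eq_eq)
  finally have Ea: "E a = N a" .
  have "c = E a * E a / Sq a" using c[of a] ab by simp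
  also have "\<dots> = 1" unfolding Ea NNa using Sp[OF aI(1)] by simp
  finally have "c = 1" .
  hence EE: "E t * E t = Sq t" if "t \<in> I" for t using c[of t] that Sp[OF that] I_def by simp
  have cE: "continuous_on I E"
  proof -
    have cp: "continuous_on I p" unfolding p_def[abs_def] by (intro continuous_intros cg1)
    have cq: "continuous_on I q" unfolding q_def[abs_def] by (intro continuous_intros cg1)
    show ?thesis unfolding E_def[abs_def] Vx_def[abs_def] Vy_def[abs_def] by (intro continuous_intros cp cq cpsi)
  qed
  have Epos: "E t > 0" if "t \<in> I" for t
  proof (rule ccontr)
    assume "\<not> E t > 0"
    moreover have "E t \<noteq> 0" using EE[OF that] Sp[OF that] by auto
    ultimately have neg: "E t < 0" by simp
    have at: "a \<le> t" using that I_def by simp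
    have "{a..t} \<subseteq> I" using that I_def by auto
    hence "continuous_on {a..t} E" using cE continuous_on_subset by blast
    moreover have "E a > 0" using Ea Npos[OF aI(1)] N_def by simp
    ultimately obtain z where z: "a \<le> z" "z \<le> t" "E z = 0" using IVT2'[of E t 0 a] neg at by force
    have "z \<in> I" using z that I_def by simp
    thus False using EE[of z] Sp[of z] z(3) by simp
  qed
  have EN: "E t = N t" if "t \<in> I" for t
  proof -
    have "(E t)^2 = (N t)^2" using EE[OF that] Nsq[of t] N_def by (simp add: power2_eq_square)
    thus ?thesis using Epos[OF that] Npos[OF that] N_def power2_eq_iff_nonneg by force
  qed
  have comp: "p t = N t * Vx t \<and> q t = N t * Vy t" if "t \<in> I" for t
  proof -
    have unit: "Vx t * Vx t + Vy t * Vy t = 1" unfolding Vx_def Vy_def by (rule trig_unit[OF cs])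
    have NN: "N t * N t = Sq t" using Nsq[of t] N_def by simp
    have "(p t - N t * Vx t) * (p t - N t * Vx t) + (q t - N t * Vy t) * (q t - N t * Vy t)
          = Sq t - 2 * N t * E t + (N t * N t) * (Vx t * Vx t + Vy t * Vy t)"
      unfolding Sq_def E_def by (simp add: algebra_simps)
    also have "\<dots> = 0" using unit NN EN[OF that] by simp
    finally show ?thesis by (simp add: sum_squares_eq_zero_iff)
  qed
  show ?thesis unfolding HT_def
  proof (intro allI impI)
    fix s t assume st: "a \<le> s" "s < t" "t \<le> b"
    have sI: "s \<in> I" and tI: "t \<in> I" using st I_def by auto
    have ps: "p s = N s * Vx s" and qs: "q s = N s * Vy s" using comp[OF sI] by auto
    have pt: "p t = N t * Vx t" and qt: "q t = N t * Vy t" using comp[OF tI] by auto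
    have det: "det2 (g1 s) (g1 t) = N s * N t * sin (\<psi> t - \<psi> s)"
    proof -
      have "det2 (g1 s) (g1 t) = p s * q t - q s * p t" unfolding det2_def p_def q_def by simp
      also have "\<dots> = N s * N t * ((cos (\<psi> s) * c0 - sin (\<psi> s) * s0) * (sin (\<psi> t) * c0 + cos (\<psi> t) * s0)
           - (sin (\<psi> s) * c0 + cos (\<psi> s) * s0) * (cos (\<psi> t) * c0 - sin (\<psi> t) * s0))"
        unfolding ps qs pt qt Vx_def Vy_def by (simp add: algebra_simps)
      also have "\<dots> = N s * N t * sin (\<psi> t - \<psi> s)" by (simp only: trig_det[OF cs])
      finally show ?thesis .
    qed
    have dot: "fst (g1 s) * fst (g1 t) + snd (g1 s) * snd (g1 t) = N s * N t * cos (\<psi> t - \<psi> s)"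
    proof -
      have "fst (g1 s) * fst (g1 t) + snd (g1 s) * snd (g1 t) = p s * p t + q s * q t" unfolding p_def q_def by simp
      also have "\<dots> = N s * N t * ((cos (\<psi> s) * c0 - sin (\<psi> s) * s0) * (cos (\<psi> t) * c0 - sin (\<psi> t) * s0)
           + (sin (\<psi> s) * c0 + cos (\<psi> s) * s0) * (sin (\<psi> t) * c0 + cos (\<psi> t) * s0))"
        unfolding ps qs pt qt Vx_def Vy_def by (simp add: algebra_simps)
      also have "\<dots> = N s * N t * cos (\<psi> t - \<psi> s)" by (simp only: trig_dot[OF cs])
      finally show ?thesis .
    qed
    have d0: "0 < \<psi> t - \<psi> s" using psi_mono[OF sI tI st(2)] by simp
    have "\<psi> t \<le> \<psi> b"
    proof (cases "t = b")
      case False thus ?thesis using psi_mono[OF tI aI(2)] st(3) by simp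
    qed simp
    moreover have "\<psi> a \<le> \<psi> s"
    proof (cases "s = a")
      case False thus ?thesis using psi_mono[OF aI(1) sI] st(1) by simp
    qed simp
    ultimately have d1: "\<psi> t - \<psi> s \<le> pi" using psia psib by simp
    have NN: "N s * N t > 0" using Npos[OF sI] Npos[OF tI] N_def by simp
    note af = angle_facts[OF d0 d1]
    show "det2 (g1 s) (g1 t) \<ge> 0 \<and> (det2 (g1 s) (g1 t) = 0 \<longrightarrow> fst (g1 s) * fst (g1 t) + snd (g1 s) * snd (g1 t) < 0)"
    proof
      show "det2 (g1 s) (g1 t) \<ge> 0" unfolding det using NN af(1) by simp
      show "det2 (g1 s) (g1 t) = 0 \<longrightarrow> fst (g1 s) * fst (g1 t) + snd (g1 s) * snd (g1 t) < 0"
      proof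
        assume "det2 (g1 s) (g1 t) = 0"
        hence "sin (\<psi> t - \<psi> s) = 0" unfolding det using NN by (metis mult_eq_0_iff less_irrefl)
        hence "cos (\<psi> t - \<psi> s) < 0" by (rule af(2))
        thus "fst (g1 s) * fst (g1 t) + snd (g1 s) * snd (g1 t) < 0" unfolding dot using NN by (simp add: mult_pos_neg)
      qed
    qed
  qed
qed


lemma delta_num: fixes d R \<delta> :: real
  assumes R: "R > 0" and dl: "\<delta> > 0" and d0: "d \<ge> 0"
    and b: "\<delta> < d\<^sup>2 / (2 * (R + d + sqrt ((R + d)\<^sup>2 - d\<^sup>2)))"
  shows "d - 2 * \<delta> > 0" "(d - 2 * \<delta>) * (d - 2 * \<delta>) > 4 * R * \<delta>"
proof -
  define s where "s = sqrt ((R + d)\<^sup>2 - d\<^sup>2)"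
  have arg: "(R + d)\<^sup>2 - d\<^sup>2 = R * R + 2 * R * d" by (simp add: power2_eq_square algebra_simps)
  have argR: "(R + d)\<^sup>2 - d\<^sup>2 \<ge> R * R" unfolding arg using R d0 by simp
  have sR: "s \<ge> R"
  proof -
    have "sqrt (R * R) \<le> s" unfolding s_def using argR by (rule real_sqrt_le_mono)
    thus ?thesis using R by simp
  qed
  have "(R + d)\<^sup>2 - d\<^sup>2 \<ge> 0" using argR R by (meson mult_nonneg_nonneg less_imp_le order_trans)
  hence ss: "s * s = (R + d)\<^sup>2 - d\<^sup>2" unfolding s_def by simp
  have den: "R + d + s > 0" using R d0 sR by simp
  have prod: "(R + d + s) * (R + d - s) = d\<^sup>2" using ss by (simp add: power2_eq_square algebra_simps)
  have "\<delta> < d\<^sup>2 / (2 * (R + d + s))" using b unfolding s_def .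
  hence "\<delta> * (2 * (R + d + s)) < d\<^sup>2" using den by (simp add: pos_less_divide_eq)
  hence "(2 * \<delta>) * (R + d + s) < (R + d - s) * (R + d + s)" using prod by (simp add: algebra_simps)
  hence u: "2 * \<delta> < R + d - s" using den by (simp add: mult_less_cancel_right)
  show "d - 2 * \<delta> > 0" using u sR by simp
  have "R + d - 2 * \<delta> > s" using u by simp
  moreover have "s \<ge> 0" using sR R by simp
  ultimately have "(R + d - 2 * \<delta>) * (R + d - 2 * \<delta>) > s * s" by (simp add: mult_strict_mono)
  hence "(R + d - 2 * \<delta>) * (R + d - 2 * \<delta>) > (R + d)\<^sup>2 - d\<^sup>2" using ss by simp
  thus "(d - 2 * \<delta>) * (d - 2 * \<delta>) > 4 * R * \<delta>" by (simp add: power2_eq_square algebra_simps)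
qed


lemma lattice_diff: assumes "P \<in> lattice v0 v1 v2" "Q \<in> lattice v0 v1 v2"
  shows "\<exists>m n :: int. P - Q = of_int m *\<^sub>R v1 + of_int n *\<^sub>R v2"
proof -
  obtain m n where P: "P = v0 + of_int m *\<^sub>R v1 + of_int n *\<^sub>R v2" using assms(1) unfolding lattice_def by blast
  obtain m' n' where Q: "Q = v0 + of_int m' *\<^sub>R v1 + of_int n' *\<^sub>R v2" using assms(2) unfolding lattice_def by blast
  have "P - Q = of_int (m - m') *\<^sub>R v1 + of_int (n - n') *\<^sub>R v2" unfolding P Q by (simp add: algebra_simps)
  thus ?thesis by blast
qed

lemma det_lattice: "det2 (of_int m *\<^sub>R v1 + of_int n *\<^sub>R v2) (of_int m' *\<^sub>R v1 + of_int n' *\<^sub>R v2)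
   = of_int (m * n' - n * m') * det2 v1 v2"
  by (simp add: det2_def algebra_simps)

lemma lattice_det_bound: assumes "P1 \<in> lattice v0 v1 v2" "P2 \<in> lattice v0 v1 v2" "P3 \<in> lattice v0 v1 v2"
  "det2 (P2 - P1) (P3 - P1) \<noteq> 0"
  shows "\<bar>det2 (P2 - P1) (P3 - P1)\<bar> \<ge> \<bar>det2 v1 v2\<bar>"
proof -
  obtain m n where 1: "P2 - P1 = of_int m *\<^sub>R v1 + of_int n *\<^sub>R v2" using lattice_diff[OF assms(2,1)] by blast
  obtain m' n' where 2: "P3 - P1 = of_int m' *\<^sub>R v1 + of_int n' *\<^sub>R v2" using lattice_diff[OF assms(3,1)] by blast
  define k where "k = m * n' - n * m'"
  have e: "det2 (P2 - P1) (P3 - P1) = of_int k * det2 v1 v2" unfolding 1 2 k_def by (rule det_lattice)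
  hence "k \<noteq> 0" using assms(4) by auto
  hence "\<bar>of_int k :: real\<bar> \<ge> 1" by linarith
  hence "\<bar>of_int k :: real\<bar> * \<bar>det2 v1 v2\<bar> \<ge> 1 * \<bar>det2 v1 v2\<bar>" by (rule mult_right_mono) simp
  thus ?thesis unfolding e by (simp add: abs_mult)
qed

lemma mindist_le: assumes "P \<in> L" "Q \<in> L" "P \<noteq> Q"
  shows "lattice_mindist L \<le> dist P Q" "lattice_mindist L \<ge> 0"
proof -
  define S where "S = {dist P Q | P Q. P \<in> L \<and> Q \<in> L \<and> P \<noteq> Q}"
  have bdd: "bdd_below S" unfolding S_def by (rule bdd_belowI[of _ 0]) auto
  have mem: "dist P Q \<in> S" unfolding S_def using assms by blast
  show "lattice_mindist L \<le> dist P Q" unfolding lattice_mindist_def S_def[symmetric] by (rule cInf_lower[OF mem bdd])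
  have "S \<noteq> {}" using mem by blast
  thus "lattice_mindist L \<ge> 0" unfolding lattice_mindist_def S_def[symmetric]
    by (rule cInf_greatest) (auto simp: S_def)
qed


lemma det_bound: "\<bar>det2 u v\<bar> \<le> norm u * norm v"
proof -
  have "(det2 u v)^2 + (fst u * fst v + snd u * snd v)^2 = (norm u)^2 * (norm v)^2"
    unfolding norm_pair_sq det2_def by (simp add: power2_eq_square algebra_simps)
  moreover have "(fst u * fst v + snd u * snd v)^2 \<ge> 0" by simp
  ultimately have "(det2 u v)^2 \<le> (norm u)^2 * (norm v)^2" by linarith
  hence "\<bar>det2 u v\<bar>^2 \<le> (norm u * norm v)^2" by (simp add: power_mult_distrib)
  thus ?thesis by (rule power2_le_imp_le) simp
qed

lemma det_expand: "det2 ((P2 + d2) - (P1 + d1)) ((P3 + d3) - (P1 + d1)) =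
   det2 (P2 - P1) (P3 - P1) + (det2 d1 (P2 - P3) + det2 d2 (P3 - P1) + det2 d3 (P1 - P2))
   + (det2 d1 d2 + det2 d2 d3 + det2 d3 d1)"
  by (simp add: det2_def algebra_simps)

lemma perturb: fixes P1 P2 P3 P1' P2' P3' :: "real \<times> real"
  assumes c: "dist P1 P1' < \<delta>" "dist P2 P2' < \<delta>" "dist P3 P3' < \<delta>"
    and A: "\<bar>det2 (P2' - P1') (P3' - P1')\<bar> \<ge> A"
  shows "tri_area P1 P2 P3 \<ge> A / 2 - (dist P2 P1 + dist P3 P2) * \<delta> - 3 / 2 * \<delta>\<^sup>2"
proof -
  define d1 where "d1 = P1' - P1"
  define d2 where "d2 = P2' - P2"
  define d3 where "d3 = P3' - P3"
  have n1: "norm d1 \<le> \<delta>" "norm d2 \<le> \<delta>" "norm d3 \<le> \<delta>"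
    using c unfolding d1_def d2_def d3_def dist_norm by (simp_all add: norm_minus_commute)
  define u where "u = dist P2 P1"
  define w where "w = dist P3 P2"
  have nu: "norm (P1 - P2) = u" "norm (P2 - P3) = w" unfolding u_def w_def dist_norm by (simp_all add: norm_minus_commute)
  have nuw: "norm (P3 - P1) \<le> u + w" unfolding u_def w_def dist_norm
    using norm_triangle_ineq[of "P3 - P2" "P2 - P1"] by (simp add: norm_minus_commute)
  have dl0: "\<delta> \<ge> 0" using n1(1) norm_ge_zero order_trans by blast
  have b1: "\<bar>det2 d1 (P2 - P3)\<bar> \<le> \<delta> * w"
  proof -
    have "\<bar>det2 d1 (P2 - P3)\<bar> \<le> norm d1 * norm (P2 - P3)" by (rule det_bound)
    also have "\<dots> \<le> \<delta> * norm (P2 - P3)" by (rule mult_right_mono[OF n1(1)]) simp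
    finally show ?thesis using nu by simp
  qed
  have b2: "\<bar>det2 d2 (P3 - P1)\<bar> \<le> \<delta> * (u + w)"
  proof -
    have "\<bar>det2 d2 (P3 - P1)\<bar> \<le> norm d2 * norm (P3 - P1)" by (rule det_bound)
    also have "\<dots> \<le> \<delta> * (u + w)" by (rule mult_mono[OF n1(2) nuw dl0]) simp
    finally show ?thesis .
  qed
  have b3: "\<bar>det2 d3 (P1 - P2)\<bar> \<le> \<delta> * u"
  proof -
    have "\<bar>det2 d3 (P1 - P2)\<bar> \<le> norm d3 * norm (P1 - P2)" by (rule det_bound)
    also have "\<dots> \<le> \<delta> * norm (P1 - P2)" by (rule mult_right_mono[OF n1(3)]) simp
    finally show ?thesis using nu by simp
  qed
  have q: "\<bar>det2 x y\<bar> \<le> \<delta> * \<delta>" if "norm x \<le> \<delta>" "norm y \<le> \<delta>" for x y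
  proof -
    have "\<bar>det2 x y\<bar> \<le> norm x * norm y" by (rule det_bound)
    also have "\<dots> \<le> \<delta> * \<delta>" by (rule mult_mono[OF that dl0]) simp
    finally show ?thesis .
  qed
  have q1: "\<bar>det2 d1 d2\<bar> \<le> \<delta> * \<delta>" by (rule q[OF n1(1,2)])
  have q2: "\<bar>det2 d2 d3\<bar> \<le> \<delta> * \<delta>" by (rule q[OF n1(2,3)])
  have q3: "\<bar>det2 d3 d1\<bar> \<le> \<delta> * \<delta>" by (rule q[OF n1(3,1)])
  have P': "P1' = P1 + d1" "P2' = P2 + d2" "P3' = P3 + d3" unfolding d1_def d2_def d3_def by simp_all
  have ex: "det2 (P2' - P1') (P3' - P1') = det2 (P2 - P1) (P3 - P1) + (det2 d1 (P2 - P3) + det2 d2 (P3 - P1) + det2 d3 (P1 - P2))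
   + (det2 d1 d2 + det2 d2 d3 + det2 d3 d1)" unfolding P' by (rule det_expand)
  have "A \<le> \<bar>det2 (P2 - P1) (P3 - P1)\<bar> + (\<delta> * w + \<delta> * (u + w) + \<delta> * u) + (\<delta> * \<delta> + \<delta> * \<delta> + \<delta> * \<delta>)"
    using A unfolding ex using b1 b2 b3 q1 q2 q3 by linarith
  moreover have "\<delta> * w + \<delta> * (u + w) + \<delta> * u = 2 * ((u + w) * \<delta>)" by (simp add: algebra_simps)
  moreover have "\<delta> * \<delta> + \<delta> * \<delta> + \<delta> * \<delta> = 3 * \<delta>\<^sup>2" by (simp add: power2_eq_square)
  ultimately have "A \<le> \<bar>det2 (P2 - P1) (P3 - P1)\<bar> + 2 * ((u + w) * \<delta>) + 3 * \<delta>\<^sup>2" by linarith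
  thus ?thesis unfolding tri_area_def u_def w_def by (simp add: field_simps)
qed


lemma CG_ord: assumes cv: "cv g g1 g2 I R" and ext: "EXT g g1 I" and e: "(fst e)^2 + (snd e)^2 = 1"
  and tI: "ta \<in> I" "tm \<in> I" "tb \<in> I"
  and dl: "\<delta> > 0" "D > 0" "D*D > 4*R*\<delta>"
  and tau: "\<tau>m - \<tau>a \<ge> D + 2*\<delta>" "\<tau>b - \<tau>m \<ge> D + 2*\<delta>"
  and xa: "\<bar>fst (rot e (g ta)) - \<tau>a\<bar> < \<delta>" and xm: "\<bar>fst (rot e (g tm)) - \<tau>m\<bar> < \<delta>" and xb: "\<bar>fst (rot e (g tb)) - \<tau>b\<bar> < \<delta>"
  and ys: "\<bar>snd (rot e (g ta)) - c\<bar> < \<delta>" "\<bar>snd (rot e (g tm)) - c\<bar> < \<delta>" "\<bar>snd (rot e (g tb)) - c\<bar> < \<delta>"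
  shows False
proof (rule CG[OF cv ext e tI dl ys])
  show "fst (rot e (g tm)) - fst (rot e (g ta)) > D" using xa xm tau by (simp add: abs_less_iff)
  show "fst (rot e (g tb)) - fst (rot e (g tm)) > D" using xb xm tau by (simp add: abs_less_iff)
qed

lemma rot_snd_det: "snd (rot e v) = det2 e v" by (simp add: rot_def det2_def)

lemma noncollinear: assumes cv: "cv g g1 g2 I R" and ext: "EXT g g1 I"
  and tI: "t1 \<in> I" "t2 \<in> I" "t3 \<in> I"
  and dl: "\<delta> > 0" "d - 2*\<delta> > 0" "(d - 2*\<delta>) * (d - 2*\<delta>) > 4*R*\<delta>"
  and sep: "dist P1' P2' \<ge> d" "dist P2' P3' \<ge> d" "dist P1' P3' \<ge> d"
  and cl: "dist (g t1) P1' < \<delta>" "dist (g t2) P2' < \<delta>" "dist (g t3) P3' < \<delta>"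
  shows "det2 (P2' - P1') (P3' - P1') \<noteq> 0"
proof
  assume col: "det2 (P2' - P1') (P3' - P1') = 0"
  define u where "u = P2' - P1'"
  have d0: "d > 0" using dl by simp
  have "norm (P1' - P2') > 0" using sep(1) d0 unfolding dist_norm by linarith
  hence un: "norm u > 0" unfolding u_def by (simp add: norm_minus_commute)
  define e where "e = (1 / norm u) *\<^sub>R u"
  have e: "(fst e)^2 + (snd e)^2 = 1"
  proof -
    have "(fst e)^2 + (snd e)^2 = ((fst u)^2 + (snd u)^2) / (norm u)^2" unfolding e_def by (simp add: power2_eq_square add_divide_distrib)
    also have "\<dots> = (norm u)^2 / (norm u)^2" using norm_pair_sq[of u] by simp
    also have "\<dots> = 1" using un by simp
    finally show ?thesis .
  qed
  have detu: "det2 e v = det2 u v / norm u" for v unfolding e_def det2_def by (simp add: diff_divide_distrib)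
  define c where "c = snd (rot e P1')"
  have s2: "snd (rot e P2') = c"
  proof -
    have "snd (rot e P2') - snd (rot e P1') = snd (rot e (P2' - P1'))" by (simp add: rot_diff)
    also have "\<dots> = 0" unfolding rot_snd_det detu u_def by (simp add: det2_def)
    finally show ?thesis unfolding c_def by simp
  qed
  have s3: "snd (rot e P3') = c"
  proof -
    have "snd (rot e P3') - snd (rot e P1') = snd (rot e (P3' - P1'))" by (simp add: rot_diff)
    also have "\<dots> = 0" unfolding rot_snd_det detu u_def using col by simp
    finally show ?thesis unfolding c_def by simp
  qed
  define \<tau> where "\<tau> P = fst (rot e P)" for P
  have tdist: "\<bar>\<tau> P - \<tau> Q\<bar> = dist P Q" if "snd (rot e P) = c" "snd (rot e Q) = c" for P Q
  proof -
    have "rot e (P - Q) = (\<tau> P - \<tau> Q, 0)" unfolding \<tau>_def rot_diff using that by (simp add: prod_eq_iff)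
    hence "norm (rot e (P - Q)) = \<bar>\<tau> P - \<tau> Q\<bar>" by simp
    thus ?thesis using rot_norm[OF e, of "P - Q"] by (simp add: dist_norm)
  qed
  have s1: "snd (rot e P1') = c" unfolding c_def ..
  have T12: "\<bar>\<tau> P1' - \<tau> P2'\<bar> \<ge> d" using tdist[OF s1 s2] sep(1) by simp
  have T23: "\<bar>\<tau> P2' - \<tau> P3'\<bar> \<ge> d" using tdist[OF s2 s3] sep(2) by simp
  have T13: "\<bar>\<tau> P1' - \<tau> P3'\<bar> \<ge> d" using tdist[OF s1 s3] sep(3) by simp
  have close: "\<bar>fst (rot e (g t)) - \<tau> P\<bar> < \<delta> \<and> \<bar>snd (rot e (g t)) - c\<bar> < \<delta>"
    if "dist (g t) P < \<delta>" "snd (rot e P) = c" for t P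
  proof -
    have n: "norm (rot e (g t - P)) < \<delta>" using rot_norm[OF e] that(1) by (simp add: dist_norm)
    have "\<bar>fst (rot e (g t - P))\<bar> < \<delta>" using norm_fst_le'[of "rot e (g t - P)"] n by linarith
    moreover have "\<bar>snd (rot e (g t - P))\<bar> < \<delta>" using norm_snd_le'[of "rot e (g t - P)"] n by linarith
    ultimately show ?thesis unfolding rot_diff \<tau>_def using that(2) by simp
  qed
  note C1 = close[OF cl(1) s1] and C2 = close[OF cl(2) s2] and C3 = close[OF cl(3) s3]
  define D where "D = d - 2*\<delta>"
  have dl': "\<delta> > 0" "D > 0" "D*D > 4*R*\<delta>" using dl unfolding D_def by auto
  have dD: "d = D + 2*\<delta>" unfolding D_def by simp
  have H: False if "ta \<in> I" "tm \<in> I" "tb \<in> I" "\<tau>m - \<tau>a \<ge> d" "\<tau>b - \<tau>m \<ge> d"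
      "\<bar>fst (rot e (g ta)) - \<tau>a\<bar> < \<delta> \<and> \<bar>snd (rot e (g ta)) - c\<bar> < \<delta>"
      "\<bar>fst (rot e (g tm)) - \<tau>m\<bar> < \<delta> \<and> \<bar>snd (rot e (g tm)) - c\<bar> < \<delta>"
      "\<bar>fst (rot e (g tb)) - \<tau>b\<bar> < \<delta> \<and> \<bar>snd (rot e (g tb)) - c\<bar> < \<delta>" for ta tm tb \<tau>a \<tau>m \<tau>b
    using CG_ord[OF cv ext e that(1-3) dl', of \<tau>m \<tau>a \<tau>b c] that(4-8) unfolding dD by blast
  consider "\<tau> P1' < \<tau> P2'" "\<tau> P2' < \<tau> P3'" | "\<tau> P1' < \<tau> P3'" "\<tau> P3' < \<tau> P2'" | "\<tau> P3' < \<tau> P1'" "\<tau> P1' < \<tau> P2'"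
    | "\<tau> P2' < \<tau> P1'" "\<tau> P1' < \<tau> P3'" | "\<tau> P2' < \<tau> P3'" "\<tau> P3' < \<tau> P1'" | "\<tau> P3' < \<tau> P2'" "\<tau> P2' < \<tau> P1'"
    using T12 T23 T13 d0 by (cases "\<tau> P1' < \<tau> P2'"; cases "\<tau> P2' < \<tau> P3'"; cases "\<tau> P1' < \<tau> P3'") auto
  thus False
  proof cases
    case 1 thus False using H[OF tI(1) tI(2) tI(3) _ _ C1 C2 C3] T12 T23 by simp
  next
    case 2 thus False using H[OF tI(1) tI(3) tI(2) _ _ C1 C3 C2] T13 T23 by simp
  next
    case 3 thus False using H[OF tI(3) tI(1) tI(2) _ _ C3 C1 C2] T13 T12 by simp
  next
    case 4 thus False using H[OF tI(2) tI(1) tI(3) _ _ C2 C1 C3] T12 T13 by simp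
  next
    case 5 thus False using H[OF tI(2) tI(3) tI(1) _ _ C2 C3 C1] T23 T13 by simp
  next
    case 6 thus False using H[OF tI(3) tI(2) tI(1) _ _ C3 C2 C1] T23 T12 by simp
  qed
qed


theorem lemma7p5:
  fixes g g1 g2 :: "real \<Rightarrow> real \<times> real"
    and a b R1 R2 \<delta> :: real
    and v0 v1 v2 P1' P2' P3' P1 P2 P3 :: "real \<times> real"
  assumes curve: "closed_convex_curve g g1 g2 a b \<or>
                  (convex_arc g g1 g2 a b \<and> total_curvature g1 g2 a b \<le> pi)"
    and R: "0 < R1" "R1 \<le> R2"
    and rho: "\<forall>t\<in>{a..b}. R1 \<le> 1 / curvature g1 g2 t \<and> 1 / curvature g1 g2 t \<le> R2"
    and indep: "det2 v1 v2 \<noteq> 0"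
    and latt: "P1' \<in> lattice v0 v1 v2" "P2' \<in> lattice v0 v1 v2" "P3' \<in> lattice v0 v1 v2"
    and distinct: "P1' \<noteq> P2'" "P2' \<noteq> P3'" "P1' \<noteq> P3'"
    and near: "infdist P1' (g ` {a..b}) < \<delta>" "infdist P2' (g ` {a..b}) < \<delta>"
              "infdist P3' (g ` {a..b}) < \<delta>"
    and delta_pos: "0 < \<delta>"
    and delta_bound: "\<delta> < (lattice_mindist (lattice v0 v1 v2))\<^sup>2 /
        (2 * (R2 + lattice_mindist (lattice v0 v1 v2) +
              sqrt ((R2 + lattice_mindist (lattice v0 v1 v2))\<^sup>2 - (lattice_mindist (lattice v0 v1 v2))\<^sup>2)))"
    and on_curve: "P1 \<in> g ` {a..b}" "P2 \<in> g ` {a..b}" "P3 \<in> g ` {a..b}"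
    and close: "dist P1 P1' < \<delta>" "dist P2 P2' < \<delta>" "dist P3 P3' < \<delta>"
  shows "tri_area P1 P2 P3 \<ge> lattice_area v1 v2 / 2 - (dist P2 P1 + dist P3 P2) * \<delta> - 3 / 2 * \<delta>\<^sup>2"
proof -
  have R2: "R2 > 0" using R by simp
  have rho': "\<forall>t\<in>{a..b}. 1 / curvature g1 g2 t \<le> R2" using rho by simp
  obtain I where cvI: "cv g g1 g2 I R2" and extI: "EXT g g1 I" and abI: "{a..b} \<subseteq> I"
  proof (cases "closed_convex_curve g g1 g2 a b")
    case True
    show ?thesis by (rule that[OF closed_pkg(1)[OF True rho' R2] closed_pkg(2)[OF True rho' R2]]) simp
  next
    case False
    hence ca: "convex_arc g g1 g2 a b" and tc: "total_curvature g1 g2 a b \<le> pi" using curve by auto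
    have ab: "a < b" using ca unfolding convex_arc_def by simp
    have "EXT g g1 {a..b}" unfolding EXT_def using ab arc_HT[OF ca tc] by blast
    thus ?thesis by (rule that[OF arc_cv[OF ca rho' R2]]) simp
  qed
  obtain t1 where t1: "t1 \<in> {a..b}" "P1 = g t1" using on_curve(1) by blast
  obtain t2 where t2: "t2 \<in> {a..b}" "P2 = g t2" using on_curve(2) by blast
  obtain t3 where t3: "t3 \<in> {a..b}" "P3 = g t3" using on_curve(3) by blast
  define L where "L = lattice v0 v1 v2"
  define d where "d = lattice_mindist L"
  have d0: "d \<ge> 0" unfolding d_def using mindist_le(2)[of P1' L P2'] latt distinct L_def by simp
  have sep: "dist P1' P2' \<ge> d" "dist P2' P3' \<ge> d" "dist P1' P3' \<ge> d"
    unfolding d_def using mindist_le(1) latt distinct L_def by auto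
  have db: "\<delta> < d\<^sup>2 / (2 * (R2 + d + sqrt ((R2 + d)\<^sup>2 - d\<^sup>2)))" using delta_bound unfolding d_def L_def .
  note dn = delta_num[OF R2 delta_pos d0 db]
  have nc: "det2 (P2' - P1') (P3' - P1') \<noteq> 0"
    by (rule noncollinear[OF cvI extI _ _ _ delta_pos dn sep]) (use t1 t2 t3 abI close in auto)
  have "\<bar>det2 (P2' - P1') (P3' - P1')\<bar> \<ge> lattice_area v1 v2"
    unfolding lattice_area_def by (rule lattice_det_bound[OF latt nc])
  thus ?thesis by (rule perturb[OF close])
qed


end
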